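(* Take $N=2$. For $\sigma,\tau\in\{X,Y,Z\}$ let $C(\sigma,\tau)_{01}=\tfrac12(I+\sigma_0)+\tfrac12(I-\sigma_0)\tau_1$ (so $C(Z,X)_{01}=\mathrm{CX}_{01}$ and $C(Z,Z)_{01}=\mathrm{CZ}_{01}$). Then: (i) the nine frames $C(\sigma,\tau)_{01}\cdot B_0$ (backward action) lie in nine pairwise distinct EEF classes, none of which equals $[B_0]$; and (ii) for all unitaries $L_1,L_2$ in the group generated by single-qubit Clifford gates and $\mathrm{SWAP}_{01}$, the frame $(L_2\,\mathrm{CX}_{01}\,L_1)\cdot B_0$ lies in one of these nine EEF classes. Consequently, in $[\mathrm{PFG}_N]$ each vertex has, for each pair of qubits, exactly nine neighbours reachable by a single two-qubit entangling gate on that pair.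
   Context: Pauli space: $\mathcal P$ is the set of $N$-qubit Pauli operators modulo overall phase, an $\mathbb F_2$-vector space with addition given by product (mod phase); $\lambda(p,q)\in\mathbb F_2$ is $0$ if $p,q$ commute and $1$ otherwise. A Pauli frame is an ordered tuple $B=\{(s_i,\tilde s_i)\}_{0\le i<N}$ of elements of $\mathcal P$ with $\lambda(s_i,s_j)=\lambda(\tilde s_i,\tilde s_j)=0$, $\lambda(s_i,\tilde s_j)=\delta_{ij}$. The origin frame is $B_0=\{(Z_i,X_i)\}_i$. For a frame $B$ let $\phi_B$ be the linear map of $\mathcal P$ with $\phi_B(Z_i)=s_i$, $\phi_B(X_i)=\tilde s_i$. The backward action of a Clifford unitary $V$ on a frame $B$ is $V\cdot B:=\{(\phi_B(V^\dagger Z_iV),\phi_B(V^\dagger X_iV))\}_i$ (mod phase); in particular $V\cdot B_0=\{(V^\dagger Z_iV,V^\dagger X_iV)\}_i$. $\bar E_N$ is the group of actions on frames generated by the backward actions of $\mathrm{SWAP}_{ij}$, Hadamard $H_i$ and phase gate $P_i=R_Z(\pi/2)$. The EEF class of $B$ is $[B]=\{\gamma\cdot B:\gamma\in\bar E_N\}$. $[\mathrm{PFG}_N]$ is the graph on EEF classes with $[B_1],[B_2]$ adjacent iff $B_2'=\mathrm{CX}_{ij}\cdot B_1'$ for some $B_1'\in[B_1]$, $B_2'\in[B_2]$, $i\neq j$. *)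

theory Defs
  imports "HOL-Analysis.Analysis"
begin

text \<open>Computational basis of one qubit is indexed by bool (False = |0>, True = |1>).
  Two-qubit basis states are indexed by bool x bool, the first component being
  the bit of qubit 0, the second that of qubit 1.\<close>

type_synonym mat2 = "complex^bool^bool"
type_synonym mat4 = "complex^(bool\<times>bool)^(bool\<times>bool)"

definition adj :: "complex^'n^'n \<Rightarrow> complex^'n^'n" where
  "adj M = (\<chi> i j. cnj (M $ j $ i))"

definition smul :: "complex \<Rightarrow> complex^'n^'n \<Rightarrow> complex^'n^'n" where
  "smul c M = (\<chi> i j. c * M $ i $ j)"

definition madd :: "complex^'n^'n \<Rightarrow> complex^'n^'n \<Rightarrow> complex^'n^'n" where
  "madd A B = (\<chi> i j. A $ i $ j + B $ i $ j)"

definition kron :: "mat2 \<Rightarrow> mat2 \<Rightarrow> mat4" where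
  "kron A B = (\<chi> r c. A $ fst r $ fst c * B $ snd r $ snd c)"

definition unitary :: "complex^'n^'n \<Rightarrow> bool" where
  "unitary U \<longleftrightarrow> adj U ** U = mat 1 \<and> U ** adj U = mat 1"

definition pX :: mat2 where "pX = (\<chi> i j. if i \<noteq> j then 1 else 0)"
definition pZ :: mat2 where "pZ = (\<chi> i j. if i = j then (if i then -1 else 1) else 0)"
definition pY :: mat2 where
  "pY = (\<chi> i j. if i = j then 0 else (if i then \<i> else - \<i>))"

text \<open>Hadamard and phase gate P = R_Z(pi/2) = exp(-i (pi/2) Z / 2).\<close>
definition hadamard :: mat2 where
  "hadamard = (\<chi> i j. complex_of_real (1 / sqrt 2) * (if i \<and> j then -1 else 1))"
definition phaseP :: mat2 where
  "phaseP = (\<chi> i j. if i = j then (if i then cis (pi/4) else cis (- pi/4)) else 0)"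

definition SWAP :: mat4 where
  "SWAP = (\<chi> r c. if r = (snd c, fst c) then 1 else 0)"

text \<open>CX_{01}: control qubit 0, target qubit 1.\<close>
definition CX01 :: mat4 where
  "CX01 = (\<chi> r c. if r = (fst c, if fst c then \<not> snd c else snd c) then 1 else 0)"

definition ctrl :: "mat2 \<Rightarrow> mat2 \<Rightarrow> mat4" where
  "ctrl \<sigma> \<tau> =
     madd (smul (1/2) (madd (mat 1) (kron \<sigma> (mat 1))))
          (smul (1/2) (madd (mat 1) (smul (-1) (kron \<sigma> (mat 1))) ** kron (mat 1) \<tau>))"

text \<open>An element of the Pauli space is represented by its Z-bits and X-bits
  ((z0,z1),(x0,x1)); it stands for the Pauli operator (mod phase)
  (Z^z0 X^x0) tensor (Z^z1 X^x1).  Addition (product mod phase) is bitwise xor.\<close>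

type_synonym pauli = "(bool\<times>bool)\<times>(bool\<times>bool)"

definition pm1 :: "bool \<Rightarrow> bool \<Rightarrow> mat2" where
  "pm1 z x = (if z then pZ else mat 1) ** (if x then pX else mat 1)"

definition pmat :: "pauli \<Rightarrow> mat4" where
  "pmat p = kron (pm1 (fst (fst p)) (fst (snd p))) (pm1 (snd (fst p)) (snd (snd p)))"

definition pzero :: pauli where "pzero = ((False,False),(False,False))"

definition padd :: "pauli \<Rightarrow> pauli \<Rightarrow> pauli" where
  "padd p q = ((fst (fst p) \<noteq> fst (fst q), snd (fst p) \<noteq> snd (fst q)),
               (fst (snd p) \<noteq> fst (snd q), snd (snd p) \<noteq> snd (snd q)))"

definition bit2 :: "nat \<Rightarrow> bool\<times>bool" where
  "bit2 i = (if i = 0 then (True,False) else (False,True))"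

definition Zq :: "nat \<Rightarrow> pauli" where "Zq i = (bit2 i, (False,False))"
definition Xq :: "nat \<Rightarrow> pauli" where "Xq i = ((False,False), bit2 i)"

definition lam :: "pauli \<Rightarrow> pauli \<Rightarrow> bool" where
  "lam p q \<longleftrightarrow> pmat p ** pmat q \<noteq> pmat q ** pmat p"

definition modphase :: "mat4 \<Rightarrow> pauli" where
  "modphase M = (THE q. \<exists>c. M = smul c (pmat q))"

text \<open>A frame is the ordered tuple ((s_0, s~_0), (s_1, s~_1)).\<close>
type_synonym frame = "(pauli\<times>pauli)\<times>(pauli\<times>pauli)"

definition fr :: "frame \<Rightarrow> nat \<Rightarrow> pauli\<times>pauli" where
  "fr B i = (if i = 0 then fst B else snd B)"

definition is_frame :: "frame \<Rightarrow> bool" where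
  "is_frame B \<longleftrightarrow> (\<forall>i<2. \<forall>j<2.
      \<not> lam (fst (fr B i)) (fst (fr B j)) \<and> \<not> lam (snd (fr B i)) (snd (fr B j)) \<and>
      lam (fst (fr B i)) (snd (fr B j)) = (i = j))"

definition B0 :: frame where "B0 = ((Zq 0, Xq 0), (Zq 1, Xq 1))"

definition phi :: "frame \<Rightarrow> pauli \<Rightarrow> pauli" where
  "phi B p = padd (padd (if fst (fst p) then fst (fr B 0) else pzero)
                        (if snd (fst p) then fst (fr B 1) else pzero))
                  (padd (if fst (snd p) then snd (fr B 0) else pzero)
                        (if snd (snd p) then snd (fr B 1) else pzero))"

definition bact :: "mat4 \<Rightarrow> frame \<Rightarrow> frame" where
  "bact V B =
     ((phi B (modphase (adj V ** pmat (Zq 0) ** V)), phi B (modphase (adj V ** pmat (Xq 0) ** V))),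
      (phi B (modphase (adj V ** pmat (Zq 1) ** V)), phi B (modphase (adj V ** pmat (Xq 1) ** V))))"

definition egens :: "mat4 set" where
  "egens = {SWAP, kron hadamard (mat 1), kron (mat 1) hadamard,
            kron phaseP (mat 1), kron (mat 1) phaseP}"

inductive_set Ebar :: "(frame \<Rightarrow> frame) set" where
  Ebar_id: "id \<in> Ebar"
| Ebar_gen: "\<gamma> \<in> Ebar \<Longrightarrow> g \<in> egens \<Longrightarrow> bact g \<circ> \<gamma> \<in> Ebar"
| Ebar_inv: "\<gamma> \<in> Ebar \<Longrightarrow> g \<in> egens \<Longrightarrow> inv (bact g) \<circ> \<gamma> \<in> Ebar"

definition eef_class :: "frame \<Rightarrow> frame set" where
  "eef_class B = {\<gamma> B | \<gamma>. \<gamma> \<in> Ebar}"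

definition clifford1 :: "mat2 \<Rightarrow> bool" where
  "clifford1 U \<longleftrightarrow> unitary U \<and>
     (\<forall>z x. \<exists>z' x' c. U ** pm1 z x ** adj U = smul c (pm1 z' x'))"

inductive_set LocCliff :: "mat4 set" where
  LC_one: "mat 1 \<in> LocCliff"
| LC_swap: "SWAP \<in> LocCliff"
| LC_q0: "clifford1 U \<Longrightarrow> kron U (mat 1) \<in> LocCliff"
| LC_q1: "clifford1 U \<Longrightarrow> kron (mat 1) U \<in> LocCliff"
| LC_mult: "A \<in> LocCliff \<Longrightarrow> B \<in> LocCliff \<Longrightarrow> A ** B \<in> LocCliff"
| LC_adj: "A \<in> LocCliff \<Longrightarrow> adj A \<in> LocCliff"

definition paulis3 :: "mat2 set" where "paulis3 = {pX, pY, pZ}"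

end

theory Submission
  imports Defs
begin

lemma UNIV_bb: "(UNIV::(bool\<times>bool) set) = {(False,False),(False,True),(True,False),(True,True)}"
  by auto
lemma sum_bool: "sum f (UNIV::bool set) = f False + f True"
  by (simp add: UNIV_bool)
lemma sum_bb: "sum f (UNIV::(bool\<times>bool) set) = f (False,False) + f (False,True) + f (True,False) + f (True,True)"
  by (simp add: UNIV_bb add.assoc)
lemma m2_eq: "(A::mat2) = B \<longleftrightarrow> A$False$False = B$False$False \<and> A$False$True = B$False$True
   \<and> A$True$False = B$True$False \<and> A$True$True = B$True$True"
  by (auto simp: vec_eq_iff) (metis (full_types))
lemma all_bb: "(\<forall>x::bool\<times>bool. P x) \<longleftrightarrow> P (False,False) \<and> P (False,True) \<and> P (True,False) \<and> P (True,True)"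
  by (metis (full_types) surj_pair)
lemma m4_eq: "(A::mat4) = B \<longleftrightarrow> (\<forall>i j. A$i$j = B$i$j)"
  by (auto simp: vec_eq_iff)
definition m4 :: "complex \<Rightarrow> complex \<Rightarrow> complex \<Rightarrow> complex \<Rightarrow> complex \<Rightarrow> complex \<Rightarrow> complex \<Rightarrow> complex \<Rightarrow> complex \<Rightarrow> complex \<Rightarrow> complex \<Rightarrow> complex \<Rightarrow> complex \<Rightarrow> complex \<Rightarrow> complex \<Rightarrow> complex \<Rightarrow> mat4" where
  "m4 a00 a01 a02 a03 a10 a11 a12 a13 a20 a21 a22 a23 a30 a31 a32 a33 = (\<chi> r c. (if r = (False,False) then (if c = (False,False) then a00 else (if c = (False,True) then a01 else (if c = (True,False) then a02 else a03))) else (if r = (False,True) then (if c = (False,False) then a10 else (if c = (False,True) then a11 else (if c = (True,False) then a12 else a13))) else (if r = (True,False) then (if c = (False,False) then a20 else (if c = (False,True) then a21 else (if c = (True,False) then a22 else a23))) else (if c = (False,False) then a30 else (if c = (False,True) then a31 else (if c = (True,False) then a32 else a33)))))))"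

lemma m4_nth[simp]:
  "m4 a00 a01 a02 a03 a10 a11 a12 a13 a20 a21 a22 a23 a30 a31 a32 a33 $ (False,False) $ (False,False) = a00"
  "m4 a00 a01 a02 a03 a10 a11 a12 a13 a20 a21 a22 a23 a30 a31 a32 a33 $ (False,False) $ (False,True) = a01"
  "m4 a00 a01 a02 a03 a10 a11 a12 a13 a20 a21 a22 a23 a30 a31 a32 a33 $ (False,False) $ (True,False) = a02"
  "m4 a00 a01 a02 a03 a10 a11 a12 a13 a20 a21 a22 a23 a30 a31 a32 a33 $ (False,False) $ (True,True) = a03"
  "m4 a00 a01 a02 a03 a10 a11 a12 a13 a20 a21 a22 a23 a30 a31 a32 a33 $ (False,True) $ (False,False) = a10"
  "m4 a00 a01 a02 a03 a10 a11 a12 a13 a20 a21 a22 a23 a30 a31 a32 a33 $ (False,True) $ (False,True) = a11"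
  "m4 a00 a01 a02 a03 a10 a11 a12 a13 a20 a21 a22 a23 a30 a31 a32 a33 $ (False,True) $ (True,False) = a12"
  "m4 a00 a01 a02 a03 a10 a11 a12 a13 a20 a21 a22 a23 a30 a31 a32 a33 $ (False,True) $ (True,True) = a13"
  "m4 a00 a01 a02 a03 a10 a11 a12 a13 a20 a21 a22 a23 a30 a31 a32 a33 $ (True,False) $ (False,False) = a20"
  "m4 a00 a01 a02 a03 a10 a11 a12 a13 a20 a21 a22 a23 a30 a31 a32 a33 $ (True,False) $ (False,True) = a21"
  "m4 a00 a01 a02 a03 a10 a11 a12 a13 a20 a21 a22 a23 a30 a31 a32 a33 $ (True,False) $ (True,False) = a22"
  "m4 a00 a01 a02 a03 a10 a11 a12 a13 a20 a21 a22 a23 a30 a31 a32 a33 $ (True,False) $ (True,True) = a23"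
  "m4 a00 a01 a02 a03 a10 a11 a12 a13 a20 a21 a22 a23 a30 a31 a32 a33 $ (True,True) $ (False,False) = a30"
  "m4 a00 a01 a02 a03 a10 a11 a12 a13 a20 a21 a22 a23 a30 a31 a32 a33 $ (True,True) $ (False,True) = a31"
  "m4 a00 a01 a02 a03 a10 a11 a12 a13 a20 a21 a22 a23 a30 a31 a32 a33 $ (True,True) $ (True,False) = a32"
  "m4 a00 a01 a02 a03 a10 a11 a12 a13 a20 a21 a22 a23 a30 a31 a32 a33 $ (True,True) $ (True,True) = a33"
  by (simp_all add: m4_def)

lemma m4_eq_iff: "m4 a00 a01 a02 a03 a10 a11 a12 a13 a20 a21 a22 a23 a30 a31 a32 a33 = m4 b00 b01 b02 b03 b10 b11 b12 b13 b20 b21 b22 b23 b30 b31 b32 b33 \<longleftrightarrow> a00 = b00 \<and> a01 = b01 \<and> a02 = b02 \<and> a03 = b03 \<and> a10 = b10 \<and> a11 = b11 \<and> a12 = b12 \<and> a13 = b13 \<and> a20 = b20 \<and> a21 = b21 \<and> a22 = b22 \<and> a23 = b23 \<and> a30 = b30 \<and> a31 = b31 \<and> a32 = b32 \<and> a33 = b33"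
  unfolding m4_eq all_bb by auto

lemma m4_mult: "m4 a00 a01 a02 a03 a10 a11 a12 a13 a20 a21 a22 a23 a30 a31 a32 a33 ** m4 b00 b01 b02 b03 b10 b11 b12 b13 b20 b21 b22 b23 b30 b31 b32 b33 = m4 (a00 * b00 + a01 * b10 + a02 * b20 + a03 * b30) (a00 * b01 + a01 * b11 + a02 * b21 + a03 * b31) (a00 * b02 + a01 * b12 + a02 * b22 + a03 * b32) (a00 * b03 + a01 * b13 + a02 * b23 + a03 * b33) (a10 * b00 + a11 * b10 + a12 * b20 + a13 * b30) (a10 * b01 + a11 * b11 + a12 * b21 + a13 * b31) (a10 * b02 + a11 * b12 + a12 * b22 + a13 * b32) (a10 * b03 + a11 * b13 + a12 * b23 + a13 * b33) (a20 * b00 + a21 * b10 + a22 * b20 + a23 * b30) (a20 * b01 + a21 * b11 + a22 * b21 + a23 * b31) (a20 * b02 + a21 * b12 + a22 * b22 + a23 * b32) (a20 * b03 + a21 * b13 + a22 * b23 + a23 * b33) (a30 * b00 + a31 * b10 + a32 * b20 + a33 * b30) (a30 * b01 + a31 * b11 + a32 * b21 + a33 * b31) (a30 * b02 + a31 * b12 + a32 * b22 + a33 * b32) (a30 * b03 + a31 * b13 + a32 * b23 + a33 * b33)"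
  unfolding m4_eq all_bb by (simp add: matrix_matrix_mult_def sum_bb)

lemma m4_adj: "adj (m4 a00 a01 a02 a03 a10 a11 a12 a13 a20 a21 a22 a23 a30 a31 a32 a33) = m4 (cnj a00) (cnj a10) (cnj a20) (cnj a30) (cnj a01) (cnj a11) (cnj a21) (cnj a31) (cnj a02) (cnj a12) (cnj a22) (cnj a32) (cnj a03) (cnj a13) (cnj a23) (cnj a33)"
  unfolding m4_eq all_bb by (simp add: adj_def)

lemma m4_smul: "smul k (m4 a00 a01 a02 a03 a10 a11 a12 a13 a20 a21 a22 a23 a30 a31 a32 a33) = m4 (k * a00) (k * a01) (k * a02) (k * a03) (k * a10) (k * a11) (k * a12) (k * a13) (k * a20) (k * a21) (k * a22) (k * a23) (k * a30) (k * a31) (k * a32) (k * a33)"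
  unfolding m4_eq all_bb by (simp add: smul_def)

lemma m4_madd: "madd (m4 a00 a01 a02 a03 a10 a11 a12 a13 a20 a21 a22 a23 a30 a31 a32 a33) (m4 b00 b01 b02 b03 b10 b11 b12 b13 b20 b21 b22 b23 b30 b31 b32 b33) = m4 (a00 + b00) (a01 + b01) (a02 + b02) (a03 + b03) (a10 + b10) (a11 + b11) (a12 + b12) (a13 + b13) (a20 + b20) (a21 + b21) (a22 + b22) (a23 + b23) (a30 + b30) (a31 + b31) (a32 + b32) (a33 + b33)"
  unfolding m4_eq all_bb by (simp add: madd_def)

lemma m4_expand: "(A::mat4) = m4 (A $ (False,False) $ (False,False)) (A $ (False,False) $ (False,True)) (A $ (False,False) $ (True,False)) (A $ (False,False) $ (True,True)) (A $ (False,True) $ (False,False)) (A $ (False,True) $ (False,True)) (A $ (False,True) $ (True,False)) (A $ (False,True) $ (True,True)) (A $ (True,False) $ (False,False)) (A $ (True,False) $ (False,True)) (A $ (True,False) $ (True,False)) (A $ (True,False) $ (True,True)) (A $ (True,True) $ (False,False)) (A $ (True,True) $ (False,True)) (A $ (True,True) $ (True,False)) (A $ (True,True) $ (True,True))"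
  unfolding m4_eq all_bb by simp

definition m2 :: "complex \<Rightarrow> complex \<Rightarrow> complex \<Rightarrow> complex \<Rightarrow> mat2" where
  "m2 a00 a01 a10 a11 = (\<chi> r c. if r then (if c then a11 else a10) else (if c then a01 else a00))"

lemma m2_nth[simp]: "m2 a00 a01 a10 a11 $ False $ False = a00" "m2 a00 a01 a10 a11 $ False $ True = a01" "m2 a00 a01 a10 a11 $ True $ False = a10" "m2 a00 a01 a10 a11 $ True $ True = a11"
  by (simp_all add: m2_def)

lemma m2_eq_iff: "m2 a00 a01 a10 a11 = m2 b00 b01 b10 b11 \<longleftrightarrow> a00 = b00 \<and> a01 = b01 \<and> a10 = b10 \<and> a11 = b11"
  unfolding m2_eq by simp

lemma m2_mult: "m2 a00 a01 a10 a11 ** m2 b00 b01 b10 b11 = m2 (a00*b00+a01*b10) (a00*b01+a01*b11) (a10*b00+a11*b10) (a10*b01+a11*b11)"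
  unfolding m2_eq by (simp add: matrix_matrix_mult_def sum_bool)

lemma m2_adj: "adj (m2 a00 a01 a10 a11) = m2 (cnj a00) (cnj a10) (cnj a01) (cnj a11)"
  unfolding m2_eq by (simp add: adj_def)

lemma m2_smul: "smul k (m2 a00 a01 a10 a11) = m2 (k*a00) (k*a01) (k*a10) (k*a11)"
  unfolding m2_eq by (simp add: smul_def)

lemma m2_madd: "madd (m2 a00 a01 a10 a11) (m2 b00 b01 b10 b11) = m2 (a00+b00) (a01+b01) (a10+b10) (a11+b11)"
  unfolding m2_eq by (simp add: madd_def)

lemma m2_expand: "(A::mat2) = m2 (A$False$False) (A$False$True) (A$True$False) (A$True$True)"
  unfolding m2_eq by simp

lemma m2_kron: "kron (m2 a00 a01 a10 a11) (m2 b00 b01 b10 b11) = m4 (a00 * b00) (a00 * b01) (a01 * b00) (a01 * b01) (a00 * b10) (a00 * b11) (a01 * b10) (a01 * b11) (a10 * b00) (a10 * b01) (a11 * b00) (a11 * b01) (a10 * b10) (a10 * b11) (a11 * b10) (a11 * b11)"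
  unfolding m4_eq all_bb by (simp add: kron_def)


lemma adj_mult: "adj (A ** B) = adj B ** (adj A :: complex^'n^'n)"
  by (simp add: vec_eq_iff adj_def matrix_matrix_mult_def cnj_sum mult.commute)
lemma adj_adj[simp]: "adj (adj A) = A"
  by (simp add: vec_eq_iff adj_def)
lemma adj_one[simp]: "adj (mat 1) = (mat 1 :: complex^'n^'n)"
  by (simp add: vec_eq_iff adj_def mat_def)
lemma adj_smul: "adj (smul c A) = smul (cnj c) (adj A)"
  by (simp add: vec_eq_iff adj_def smul_def)
lemma smul_mult_left: "smul c A ** B = smul c (A ** (B::complex^'n^'n))"
  by (simp add: vec_eq_iff smul_def matrix_matrix_mult_def sum_distrib_left mult.assoc)
lemma smul_mult_right: "A ** smul c B = smul c (A ** (B::complex^'n^'n))"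
  by (simp add: vec_eq_iff smul_def matrix_matrix_mult_def sum_distrib_left algebra_simps)
lemma smul_smul[simp]: "smul a (smul b A) = smul (a*b) A"
  by (simp add: vec_eq_iff smul_def)
lemma smul_one[simp]: "smul 1 A = A"
  by (simp add: vec_eq_iff smul_def)
lemma kron_mult: "kron A B ** kron C D = kron (A ** C) (B ** D)"
  unfolding m4_eq all_bb by (simp add: kron_def matrix_matrix_mult_def sum_bb sum_bool algebra_simps)
lemma adj_kron: "adj (kron A B) = kron (adj A) (adj B)"
  unfolding m4_eq all_bb by (simp add: kron_def adj_def)
lemma kron_smul_left: "kron (smul c A) B = smul c (kron A B)"
  unfolding m4_eq all_bb by (simp add: kron_def smul_def)
lemma kron_smul_right: "kron A (smul c B) = smul c (kron A B)"
  unfolding m4_eq all_bb by (simp add: kron_def smul_def)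
lemma kron_one: "kron (mat 1) (mat 1) = mat 1"
  unfolding m4_eq all_bb by (simp add: kron_def mat_def)
lemma swap_conj: "SWAP ** kron A B ** SWAP = kron B A"
  unfolding m4_eq all_bb by (simp add: kron_def SWAP_def matrix_matrix_mult_def sum_bb)
lemma adj_swap: "adj SWAP = SWAP"
  unfolding m4_eq all_bb by (simp add: adj_def SWAP_def)
lemma swap_swap: "SWAP ** SWAP = mat 1"
  unfolding m4_eq all_bb by (simp add: mat_def SWAP_def matrix_matrix_mult_def sum_bb)
lemma smul_zero_iff: "smul c A = smul c B \<Longrightarrow> c \<noteq> 0 \<Longrightarrow> A = B"
  by (simp add: vec_eq_iff smul_def)
lemma pX_m2: "pX = m2 0 1 1 0" unfolding m2_eq by (simp add: pX_def)
lemma pY_m2: "pY = m2 0 (-\<i>) \<i> 0" unfolding m2_eq by (simp add: pY_def)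
lemma pZ_m2: "pZ = m2 1 0 0 (-1)" unfolding m2_eq by (simp add: pZ_def)
lemma I2_m2: "(mat 1::mat2) = m2 1 0 0 1" unfolding m2_eq by (simp add: mat_def)
lemma I4_m4: "(mat 1::mat4) = m4 1 0 0 0 0 1 0 0 0 0 1 0 0 0 0 1" unfolding m4_eq all_bb by (simp add: mat_def)



lemma pm1_m2: "pm1 z x = m2 (if x then 0 else 1) (if x then 1 else 0)
   (if x then (if z then -1 else 1) else 0) (if x then 0 else (if z then -1 else 1))"
  by (cases z; cases x) (simp_all add: pm1_def pZ_m2 pX_m2 I2_m2 m2_mult)

lemma pm1_mult: "pm1 a b ** pm1 c d = smul (if b \<and> c then -1 else 1) (pm1 (a \<noteq> c) (b \<noteq> d))"
  by (cases a; cases b; cases c; cases d) (simp_all add: pm1_m2 m2_mult m2_smul)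

lemma pm1_inj: "smul c (pm1 a b) = smul d (pm1 a' b') \<Longrightarrow> c \<noteq> 0 \<Longrightarrow> a = a' \<and> b = b'"
  by (cases a; cases b; cases a'; cases b') (auto simp: pm1_m2 m2_smul m2_eq_iff)

lemma pm1_nz: "pm1 a b \<noteq> smul 0 A"
  by (subst m2_expand[of A]) (cases a; cases b; simp add: pm1_m2 m2_smul m2_eq_iff)

definition sg :: "pauli \<Rightarrow> pauli \<Rightarrow> complex" where
  "sg p q = (if fst (snd p) \<and> fst (fst q) then -1 else 1) * (if snd (snd p) \<and> snd (fst q) then -1 else 1)"

lemma sg_nz: "sg p q \<noteq> 0" by (simp add: sg_def)
lemma sg_sq: "sg p q * sg p q = 1" by (simp add: sg_def)

lemma pmat_mult: "pmat p ** pmat q = smul (sg p q) (pmat (padd p q))"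
  by (simp add: pmat_def kron_mult pm1_mult kron_smul_left kron_smul_right padd_def sg_def mult.commute)

lemma pmat_zero: "pmat pzero = mat 1"
  by (simp add: pmat_def pzero_def pm1_def kron_one)

lemma pauli_cases: obtains z0 z1 x0 x1 where "(r::pauli) = ((z0,z1),(x0,x1))"
  by (metis prod.exhaust)

lemma pmat_scalar: "pmat r = smul k (mat 1) \<Longrightarrow> r = pzero"
  apply (rule pauli_cases[of r])
  subgoal for z0 z1 x0 x1
  by (cases z0; cases z1; cases x0; cases x1)
     (auto simp: pmat_def pm1_m2 m2_kron I4_m4 m4_smul m4_eq_iff pzero_def)
  done

lemma padd_comm: "padd p q = padd q p" by (auto simp: padd_def prod_eq_iff)
lemma padd_assoc: "padd (padd p q) r = padd p (padd q r)" by (auto simp: padd_def prod_eq_iff)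
interpretation padd: abel_semigroup padd
  by unfold_locales (auto simp: padd_def prod_eq_iff)
lemma padd_zero[simp]: "padd p pzero = p" "padd pzero p = p" by (auto simp: padd_def pzero_def prod_eq_iff)
lemma padd_self[simp]: "padd p p = pzero" by (auto simp: padd_def pzero_def prod_eq_iff)
lemma padd_cancel[simp]: "padd p (padd p q) = q" "padd q (padd p p) = q"
  by (auto simp: padd_def pzero_def prod_eq_iff)
lemma padd_eq_zero: "padd p q = pzero \<longleftrightarrow> p = q"
  by (cases p; cases q) (auto simp: padd_def pzero_def prod_eq_iff)

lemma pmat_inj: assumes "smul c (pmat p) = smul d (pmat q)" "c \<noteq> 0" shows "p = q"
proof -
  have "smul c (pmat p) ** pmat q = smul d (pmat q) ** pmat q" using assms by simp
  hence "smul (c * sg p q) (pmat (padd p q)) = smul (d * sg q q) (mat 1)"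
    by (simp add: smul_mult_left pmat_mult pmat_zero)
  hence "smul (1/(c * sg p q)) (smul (c * sg p q) (pmat (padd p q))) = smul (1/(c * sg p q)) (smul (d * sg q q) (mat 1))"
    by simp
  hence "pmat (padd p q) = smul (d * sg q q/(c * sg p q)) (mat 1)"
    using assms(2) sg_nz[of p q] by simp
  from pmat_scalar[OF this] show ?thesis by (simp add: padd_eq_zero)
qed

lemma modphase_eq: "c \<noteq> 0 \<Longrightarrow> modphase (smul c (pmat q)) = q"
  unfolding modphase_def
  by (rule the_equality) (auto dest: pmat_inj)


definition sel :: "bool \<Rightarrow> pauli \<Rightarrow> pauli" where "sel a u = (if a then u else pzero)"
definition plin :: "(pauli \<Rightarrow> pauli) \<Rightarrow> bool" where
  "plin h \<longleftrightarrow> (\<forall>p q. h (padd p q) = padd (h p) (h q))"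
definition mk :: "(pauli \<Rightarrow> pauli) \<Rightarrow> frame" where
  "mk f = ((f (Zq 0), f (Xq 0)), (f (Zq 1), f (Xq 1)))"

lemma phi_sel: "phi B p = padd (padd (sel (fst (fst p)) (fst (fst B))) (sel (snd (fst p)) (fst (snd B))))
    (padd (sel (fst (snd p)) (snd (fst B))) (sel (snd (snd p)) (snd (snd B))))"
  by (simp add: phi_def sel_def fr_def)

lemma sel_xor: "sel (a \<noteq> b) u = padd (sel a u) (sel b u)"
  by (cases a; cases b) (simp_all add: sel_def)

lemma padd_bits[simp]: "fst (fst (padd p q)) = (fst (fst p) \<noteq> fst (fst q))"
  "snd (fst (padd p q)) = (snd (fst p) \<noteq> snd (fst q))"
  "fst (snd (padd p q)) = (fst (snd p) \<noteq> fst (snd q))"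
  "snd (snd (padd p q)) = (snd (snd p) \<noteq> snd (snd q))"
  by (simp_all add: padd_def)

lemma sel_xor2: "sel (a = (\<not> b)) u = padd (sel a u) (sel b u)"
  by (cases a; cases b) (simp_all add: sel_def)

lemma phi_lin: "plin (phi B)"
  unfolding plin_def phi_sel by (simp add: sel_xor sel_xor2 padd.assoc padd.commute padd.left_commute)

lemma plin_zero: "plin h \<Longrightarrow> h pzero = pzero"
proof -
  assume h: "plin h"
  have "h pzero = h (padd pzero pzero)" by simp
  also have "\<dots> = padd (h pzero) (h pzero)" using h unfolding plin_def by blast
  finally show ?thesis by simp
qed

lemma plin_sel: "plin h \<Longrightarrow> h (sel a u) = sel a (h u)"
  by (simp add: sel_def plin_zero)

lemma plin_comp: "plin h \<Longrightarrow> plin k \<Longrightarrow> plin (h \<circ> k)"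
  unfolding plin_def by (simp only: comp_apply simp_thms)
lemma plin_id: "plin id" by (simp add: plin_def)

lemma phi_B0: "phi B0 p = p"
  apply (rule pauli_cases[of p])
  subgoal for z0 z1 x0 x1
    by (cases z0; cases z1; cases x0; cases x1) (simp_all add: phi_def B0_def fr_def Zq_def Xq_def bit2_def padd_def pzero_def)
  done

lemma decomp: "p = padd (padd (sel (fst (fst p)) (Zq 0)) (sel (snd (fst p)) (Zq 1)))
    (padd (sel (fst (snd p)) (Xq 0)) (sel (snd (snd p)) (Xq 1)))"
  using phi_B0[of p] by (simp add: phi_sel B0_def)

lemma phi_mk: "plin f \<Longrightarrow> phi (mk f) = f"
proof
  fix p assume f: "plin f"
  have "f p = f (padd (padd (sel (fst (fst p)) (Zq 0)) (sel (snd (fst p)) (Zq 1)))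
    (padd (sel (fst (snd p)) (Xq 0)) (sel (snd (snd p)) (Xq 1))))" using decomp[of p] by simp
  also have "\<dots> = phi (mk f) p"
    using f by (simp add: plin_def[of f, THEN iffD1, OF f] plin_sel phi_sel mk_def)
  finally show "phi (mk f) p = f p" by simp
qed

lemma mk_phi[simp]: "mk (phi B) = B"
  by (simp add: mk_def phi_def fr_def Zq_def Xq_def bit2_def)

definition ract :: "(pauli \<Rightarrow> pauli) \<Rightarrow> frame \<Rightarrow> frame" where "ract h B = mk (phi B \<circ> h)"
definition lact :: "(pauli \<Rightarrow> pauli) \<Rightarrow> frame \<Rightarrow> frame" where "lact h B = mk (h \<circ> phi B)"

lemma ract_ract: "plin h \<Longrightarrow> ract k (ract h B) = ract (h \<circ> k) B"
  by (simp add: ract_def phi_mk plin_comp phi_lin comp_assoc)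
lemma lact_lact: "plin h \<Longrightarrow> plin k \<Longrightarrow> lact k (lact h B) = lact (k \<circ> h) B"
  by (simp add: lact_def phi_mk plin_comp phi_lin comp_assoc)
lemma lact_ract: "plin s \<Longrightarrow> plin t \<Longrightarrow> lact s (ract t B) = ract t (lact s B)"
  by (simp add: lact_def ract_def phi_mk plin_comp phi_lin comp_assoc)
lemma ract_id: "ract id B = B" by (simp add: ract_def)
lemma lact_id: "lact id B = B" by (simp add: lact_def)

definition pclif :: "mat4 \<Rightarrow> (pauli \<Rightarrow> pauli) \<Rightarrow> bool" where
  "pclif V h \<longleftrightarrow> (\<forall>p. \<exists>c. c \<noteq> 0 \<and> adj V ** pmat p ** V = smul c (pmat (h p)))"
definition Sm :: "mat4 \<Rightarrow> pauli \<Rightarrow> pauli" where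
  "Sm V p = modphase (adj V ** pmat p ** V)"

lemma pclif_Sm: "pclif V h \<Longrightarrow> Sm V = h"
proof
  fix p assume "pclif V h"
  then obtain c where "c \<noteq> 0" "adj V ** pmat p ** V = smul c (pmat (h p))"
    unfolding pclif_def by blast
  thus "Sm V p = h p" by (simp add: Sm_def modphase_eq)
qed

lemma bact_mk: "bact V B = mk (phi B \<circ> Sm V)"
  by (simp add: bact_def mk_def Sm_def)

lemma pclif_mult: assumes "pclif A h" "pclif B k" shows "pclif (A ** B) (k \<circ> h)"
  unfolding pclif_def
proof
  fix p
  from assms(1) obtain c where c: "c \<noteq> 0" "adj A ** pmat p ** A = smul c (pmat (h p))"
    unfolding pclif_def by blast
  from assms(2) obtain d where d: "d \<noteq> 0" "adj B ** pmat (h p) ** B = smul d (pmat (k (h p)))"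
    unfolding pclif_def by blast
  have "adj (A ** B) ** pmat p ** (A ** B) = adj B ** (adj A ** pmat p ** A) ** B"
    by (simp add: adj_mult matrix_mul_assoc)
  also have "\<dots> = smul (c*d) (pmat (k (h p)))"
    by (simp add: c d smul_mult_left smul_mult_right)
  finally show "\<exists>c. c \<noteq> 0 \<and> adj (A ** B) ** pmat p ** (A ** B) = smul c (pmat ((k \<circ> h) p))"
    using c(1) d(1) by (intro exI[of _ "c*d"]) simp
qed

lemma unitary_mult: "unitary A \<Longrightarrow> unitary B \<Longrightarrow> unitary (A ** B)"
proof -
  assume a: "unitary A" and b: "unitary B"
  have "adj (A ** B) ** (A ** B) = adj B ** ((adj A ** A) ** B)"
    by (simp add: adj_mult matrix_mul_assoc)
  moreover have "(A ** B) ** adj (A ** B) = A ** ((B ** adj B) ** adj A)"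
    by (simp add: adj_mult matrix_mul_assoc)
  ultimately show ?thesis using a b unfolding unitary_def by simp
qed
lemma unitary_adj: "unitary A \<Longrightarrow> unitary (adj A)"
  unfolding unitary_def by simp

lemma conj_mult: assumes "unitary V" shows "adj V ** (P ** Q) ** V = (adj V ** P ** V) ** (adj V ** Q ** V)"
proof -
  have "(adj V ** P ** V) ** (adj V ** Q ** V) = adj V ** P ** ((V ** adj V) ** Q) ** V"
    by (simp add: matrix_mul_assoc)
  thus ?thesis using assms unfolding unitary_def by (simp add: matrix_mul_assoc)
qed

lemma pmat_padd: "pmat (padd p q) = smul (sg p q) (pmat p ** pmat q)"
  by (simp add: pmat_mult sg_sq)

lemma pclif_add:
  assumes V: "unitary V" and a: "a \<noteq> 0" "adj V ** pmat p ** V = smul a (pmat p')"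
    and b: "b \<noteq> 0" "adj V ** pmat q ** V = smul b (pmat q')"
  shows "\<exists>c. c \<noteq> 0 \<and> adj V ** pmat (padd p q) ** V = smul c (pmat (padd p' q'))"
proof -
  have "adj V ** pmat (padd p q) ** V = smul (sg p q) (adj V ** (pmat p ** pmat q) ** V)"
    by (subst pmat_padd) (simp only: smul_mult_left smul_mult_right)
  also have "\<dots> = smul (sg p q * a * b * sg p' q') (pmat (padd p' q'))"
    apply (simp only: conj_mult[OF V])
    by (simp add: a b smul_mult_left smul_mult_right pmat_mult mult_ac)
  finally show ?thesis using a b sg_nz by (intro exI[of _ "sg p q * a * b * sg p' q'"]) auto
qed


lemma pb_add:
  assumes V: "unitary V"
    and "\<exists>c. c \<noteq> 0 \<and> adj V ** pmat p ** V = smul c (pmat (phi G p))"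
    and "\<exists>c. c \<noteq> 0 \<and> adj V ** pmat q ** V = smul c (pmat (phi G q))"
  shows "\<exists>c. c \<noteq> 0 \<and> adj V ** pmat (padd p q) ** V = smul c (pmat (phi G (padd p q)))"
proof -
  obtain a where a: "a \<noteq> 0" "adj V ** pmat p ** V = smul a (pmat (phi G p))" using assms(2) by blast
  obtain b where b: "b \<noteq> 0" "adj V ** pmat q ** V = smul b (pmat (phi G q))" using assms(3) by blast
  have e: "phi G (padd p q) = padd (phi G p) (phi G q)" using phi_lin[of G] unfolding plin_def by blast
  show ?thesis unfolding e by (rule pclif_add[OF V a b])
qed

lemma pb_zero:
  assumes V: "unitary V"
  shows "\<exists>c. c \<noteq> 0 \<and> adj V ** pmat pzero ** V = smul c (pmat (phi G pzero))"
proof -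
  have z0: "adj V ** pmat pzero ** V = smul 1 (pmat (phi G pzero))"
    using V plin_zero[OF phi_lin[of G]] by (simp add: pmat_zero unitary_def)
  show ?thesis by (rule exI[of _ 1]) (simp only: z0 one_neq_zero not_False_eq_True simp_thms)
qed

lemma pclif_basis:
  assumes V: "unitary V"
    and bas: "\<And>b. b \<in> {Zq 0, Xq 0, Zq 1, Xq 1} \<Longrightarrow> \<exists>c. c \<noteq> 0 \<and> adj V ** pmat b ** V = smul c (pmat (phi G b))"
  shows "pclif V (phi G)"
  unfolding pclif_def
proof
  fix p
  have s: "\<exists>c. c \<noteq> 0 \<and> adj V ** pmat (sel a b) ** V = smul c (pmat (phi G (sel a b)))"
    if "b \<in> {Zq 0, Xq 0, Zq 1, Xq 1}" for a b
    using bas[OF that] pb_zero[OF V] by (cases a) (simp_all only: sel_def if_True if_False)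
  have "\<exists>c. c \<noteq> 0 \<and> adj V ** pmat (padd (padd (sel (fst (fst p)) (Zq 0)) (sel (snd (fst p)) (Zq 1)))
      (padd (sel (fst (snd p)) (Xq 0)) (sel (snd (snd p)) (Xq 1)))) ** V = 
      smul c (pmat (phi G (padd (padd (sel (fst (fst p)) (Zq 0)) (sel (snd (fst p)) (Zq 1)))
      (padd (sel (fst (snd p)) (Xq 0)) (sel (snd (snd p)) (Xq 1))))))"
    by (intro pb_add[OF V] s; simp)
  thus "\<exists>c. c \<noteq> 0 \<and> adj V ** pmat p ** V = smul c (pmat (phi G p))" by (simp only: decomp[symmetric])
qed


lemma pclif_inj: assumes U: "unitary A" and h: "pclif A h" shows "inj h"
proof (rule injI)
  fix p q assume e: "h p = h q"
  obtain a where a: "a \<noteq> 0" "adj A ** pmat p ** A = smul a (pmat (h p))" using h unfolding pclif_def by blast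
  obtain b where b: "b \<noteq> 0" "adj A ** pmat q ** A = smul b (pmat (h q))" using h unfolding pclif_def by blast
  have cback: "A ** (adj A ** M ** A) ** adj A = M" for M
  proof -
    have "A ** (adj A ** M ** A) ** adj A = (A ** adj A) ** M ** (A ** adj A)" by (simp add: matrix_mul_assoc)
    thus ?thesis using U unfolding unitary_def by simp
  qed
  have "smul b (adj A ** pmat p ** A) = smul a (adj A ** pmat q ** A)"
    using a(2) b(2) e by (simp add: mult.commute)
  hence "A ** smul b (adj A ** pmat p ** A) ** adj A = A ** smul a (adj A ** pmat q ** A) ** adj A" by simp
  hence "smul b (pmat p) = smul a (pmat q)" by (simp only: smul_mult_left smul_mult_right cback)
  thus "p = q" using b(1) by (rule pmat_inj)
qed

lemma finite_pauli: "finite (UNIV :: pauli set)" by simp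

lemma pclif_adj: assumes U: "unitary A" and h: "pclif A h" shows "pclif (adj A) (inv h)"
  unfolding pclif_def
proof
  fix q
  have "inj h" by (rule pclif_inj[OF U h])
  hence "surj h" using finite_UNIV_inj_surj[OF finite_pauli] by blast
  hence hq: "h (inv h q) = q" by (simp add: surj_f_inv_f)
  obtain a where a0: "a \<noteq> 0" "adj A ** pmat (inv h q) ** A = smul a (pmat (h (inv h q)))"
    using h unfolding pclif_def by blast
  hence a: "a \<noteq> 0" "adj A ** pmat (inv h q) ** A = smul a (pmat q)" using hq by simp_all
  have "A ** (adj A ** pmat (inv h q) ** A) ** adj A = (A ** adj A) ** pmat (inv h q) ** (A ** adj A)"
    by (simp add: matrix_mul_assoc)
  hence "pmat (inv h q) = A ** smul a (pmat q) ** adj A" using U a(2) unfolding unitary_def by simp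
  hence "pmat (inv h q) = smul a (A ** pmat q ** adj A)" by (simp only: smul_mult_left smul_mult_right)
  hence "smul (1/a) (pmat (inv h q)) = A ** pmat q ** adj A" using a(1) by simp
  thus "\<exists>c. c \<noteq> 0 \<and> adj (adj A) ** pmat q ** adj A = smul c (pmat (inv h q))"
    using a(1) by (intro exI[of _ "1/a"]) simp
qed

lemma pclif_one: "pclif (mat 1) id"
  unfolding pclif_def by (intro allI exI[of _ 1]) simp

lemma unitary_one: "unitary (mat 1)" by (simp add: unitary_def)

definition GS :: frame where "GS = ((Zq 1, Xq 1), (Zq 0, Xq 0))"
definition GH0 :: frame where "GH0 = ((Xq 0, Zq 0), (Zq 1, Xq 1))"
definition GH1 :: frame where "GH1 = ((Zq 0, Xq 0), (Xq 1, Zq 1))"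
definition GP0 :: frame where "GP0 = ((Zq 0, padd (Zq 0) (Xq 0)), (Zq 1, Xq 1))"
definition GP1 :: frame where "GP1 = ((Zq 0, Xq 0), (Zq 1, padd (Zq 1) (Xq 1)))"
lemmas Gdefs = GS_def GH0_def GH1_def GP0_def GP1_def

lemma phi_conc: "phi G ((z0,z1),(x0,x1)) = padd (padd (sel z0 (fst (fst G))) (sel z1 (fst (snd G))))
    (padd (sel x0 (snd (fst G))) (sel x1 (snd (snd G))))"
  by (simp add: phi_sel)

lemmas psimps = phi_conc sel_def Gdefs Zq_def Xq_def bit2_def padd_def pzero_def

lemma phi_GS: "phi GS ((z0,z1),(x0,x1)) = ((z1,z0),(x1,x0))"
  by (cases z0; cases z1; cases x0; cases x1) (simp_all add: psimps)

definition gmaps :: "(pauli \<Rightarrow> pauli) set" where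
  "gmaps = {phi GS, phi GH0, phi GH1, phi GP0, phi GP1}"

lemma invol_aux: "(\<And>z0 z1 x0 x1. phi G (phi G ((z0,z1),(x0,x1))) = ((z0,z1),(x0,x1))) \<Longrightarrow> phi G \<circ> phi G = id"
proof (rule ext)
  fix p assume a: "\<And>z0 z1 x0 x1. phi G (phi G ((z0,z1),(x0,x1))) = ((z0,z1),(x0,x1))"
  show "(phi G \<circ> phi G) p = id p" by (rule pauli_cases[of p]) (simp add: a)
qed

lemma gm_invol: "s \<in> gmaps \<Longrightarrow> s \<circ> s = id"
  unfolding gmaps_def
  apply (elim insertE; (simp only: empty_iff)?)
  by (rule invol_aux; (case_tac z0; case_tac z1; case_tac x0; case_tac x1); simp add: psimps)+

inductive_set Lmaps :: "(pauli \<Rightarrow> pauli) set" where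
  Lm_id: "id \<in> Lmaps"
| Lm_step: "s \<in> gmaps \<Longrightarrow> h \<in> Lmaps \<Longrightarrow> s \<circ> h \<in> Lmaps"

lemma gm_lin: "s \<in> gmaps \<Longrightarrow> plin s"
  unfolding gmaps_def by (blast intro: phi_lin)

lemma Lmaps_lin: "h \<in> Lmaps \<Longrightarrow> plin h"
  by (induction rule: Lmaps.induct) (blast intro: plin_comp plin_id gm_lin)+

lemma Lmaps_comp: "h \<in> Lmaps \<Longrightarrow> k \<in> Lmaps \<Longrightarrow> h \<circ> k \<in> Lmaps"
  by (induction rule: Lmaps.induct) (auto simp: comp_assoc intro: Lm_step)

lemma Lmaps_gen: "s \<in> gmaps \<Longrightarrow> s \<in> Lmaps"
  using Lm_step[OF _ Lm_id] by fastforce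

lemma gm_bij: "s \<in> gmaps \<Longrightarrow> bij s"
  by (rule o_bij[of s s]) (simp_all add: gm_invol)

lemma gm_inv: "s \<in> gmaps \<Longrightarrow> inv s = s"
  by (rule inv_unique_comp) (simp_all add: gm_invol)

lemma Lmaps_bij: "h \<in> Lmaps \<Longrightarrow> bij h"
  by (induction rule: Lmaps.induct) (blast intro: bij_comp gm_bij bij_id)+

lemma Lmaps_inv: "h \<in> Lmaps \<Longrightarrow> inv h \<in> Lmaps"
proof (induction rule: Lmaps.induct)
  case Lm_id show ?case by (simp only: inv_id) (rule Lmaps.Lm_id)
next
  case (Lm_step s h)
  have "inv (s \<circ> h) = inv h \<circ> inv s" using Lm_step gm_bij Lmaps_bij by (simp add: o_inv_distrib)
  hence "inv (s \<circ> h) = inv h \<circ> s" using gm_inv[OF Lm_step.hyps(1)] by simp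
  moreover have "inv h \<circ> s \<in> Lmaps" by (rule Lmaps_comp[OF Lm_step.IH Lmaps_gen[OF Lm_step.hyps(1)]])
  ultimately show ?case by (simp only:)
qed


abbreviation pmq :: "bool \<times> bool \<Rightarrow> mat2" where "pmq q \<equiv> pm1 (fst q) (snd q)"

lemma conj_back1: "unitary U \<Longrightarrow> adj U ** (U ** M ** adj U) ** U = M"
proof -
  assume u: "unitary U"
  have "adj U ** (U ** M ** adj U) ** U = (adj U ** U) ** M ** (adj U ** U)" by (simp add: matrix_mul_assoc)
  thus ?thesis using u unfolding unitary_def by simp
qed

lemma cliff1_struct:
  assumes cl: "clifford1 U"
  shows "\<exists>g. bij g \<and> g (False,False) = (False,False) \<and>
     (\<forall>q. \<exists>c. c \<noteq> 0 \<and> adj U ** pmq q ** U = smul c (pmq (g q)))"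
proof -
  have U: "unitary U" using cl unfolding clifford1_def by blast
  have "\<forall>q. \<exists>r c. U ** pmq q ** adj U = smul c (pmq r)"
  proof
    fix q
    obtain z' x' c where "U ** pm1 (fst q) (snd q) ** adj U = smul c (pm1 z' x')"
      using cl unfolding clifford1_def by blast
    thus "\<exists>r c. U ** pmq q ** adj U = smul c (pmq r)" by (intro exI[of _ "(z',x')"]) auto
  qed
  then obtain F where F: "\<And>q. \<exists>c. U ** pmq q ** adj U = smul c (pmq (F q))"
    by metis
  have nz: "c \<noteq> 0" if "U ** pmq q ** adj U = smul c X" for q c X
  proof
    assume c0: "c = 0"
    have "pmq q = adj U ** (U ** pmq q ** adj U) ** U" using conj_back1[OF U] by simp
    also have "\<dots> = smul 0 (adj U ** X ** U)" using that c0 by (simp add: smul_mult_left smul_mult_right)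
    finally show False using pm1_nz by blast
  qed
  have injF: "inj F"
  proof (rule injI)
    fix q1 q2 assume e: "F q1 = F q2"
    obtain c1 where c1: "U ** pmq q1 ** adj U = smul c1 (pmq (F q1))" using F by blast
    obtain c2 where c2: "U ** pmq q2 ** adj U = smul c2 (pmq (F q1))" using F e by metis
    have "pmq q1 = smul c1 (adj U ** pmq (F q1) ** U)"
      using conj_back1[OF U, of "pmq q1"] c1 by (simp add: smul_mult_left smul_mult_right)
    moreover have "pmq q2 = smul c2 (adj U ** pmq (F q1) ** U)"
      using conj_back1[OF U, of "pmq q2"] c2 by (simp add: smul_mult_left smul_mult_right)
    ultimately have "smul c2 (pm1 (fst q1) (snd q1)) = smul c1 (pm1 (fst q2) (snd q2))"
      by (simp add: mult.commute)
    moreover have "c2 \<noteq> 0" using nz c2 by blast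
    ultimately have "fst q1 = fst q2 \<and> snd q1 = snd q2" by (rule pm1_inj)
    thus "q1 = q2" by (simp add: prod_eq_iff)
  qed
  have F0: "F (False,False) = (False,False)"
  proof -
    obtain c where c: "U ** pmq (False,False) ** adj U = smul c (pmq (F (False,False)))" using F by blast
    have "U ** pmq (False,False) ** adj U = mat 1" using U by (simp add: pm1_def unitary_def)
    hence "smul 1 (pm1 False False) = smul c (pmq (F (False,False)))" using c by (simp add: pm1_def)
    hence "False = fst (F (False,False)) \<and> False = snd (F (False,False))" by (rule pm1_inj) simp
    thus ?thesis by (metis prod.collapse)
  qed
  have bijF: "bij F" using injF finite_UNIV_inj_surj[of F] by (simp add: bij_def)
  define g where "g = inv F"
  have "bij g" unfolding g_def by (rule bij_imp_bij_inv[OF bijF])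
  moreover have "g (False,False) = (False,False)" unfolding g_def using F0 injF by (metis inv_f_f)
  moreover have "\<exists>c. c \<noteq> 0 \<and> adj U ** pmq q ** U = smul c (pmq (g q))" for q
  proof -
    have Fg: "F (g q) = q" unfolding g_def using bijF by (simp add: bij_is_surj surj_f_inv_f)
    obtain c where c: "U ** pmq (g q) ** adj U = smul c (pmq (F (g q)))" using F by blast
    hence c': "U ** pmq (g q) ** adj U = smul c (pmq q)" using Fg by simp
    have c0: "c \<noteq> 0" using nz c' by blast
    have "pmq (g q) = smul c (adj U ** pmq q ** U)"
      using conj_back1[OF U, of "pmq (g q)"] c' by (simp add: smul_mult_left smul_mult_right)
    hence "smul (1/c) (pmq (g q)) = adj U ** pmq q ** U" using c0 by simp
    thus ?thesis using c0 by (intro exI[of _ "1/c"]) simp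
  qed
  ultimately show ?thesis by blast
qed

definition lift0 :: "(bool \<times> bool \<Rightarrow> bool \<times> bool) \<Rightarrow> pauli \<Rightarrow> pauli" where
  "lift0 g p = ((fst (g (fst (fst p), fst (snd p))), snd (fst p)), (snd (g (fst (fst p), fst (snd p))), snd (snd p)))"
definition lift1 :: "(bool \<times> bool \<Rightarrow> bool \<times> bool) \<Rightarrow> pauli \<Rightarrow> pauli" where
  "lift1 g p = ((fst (fst p), fst (g (snd (fst p), snd (snd p)))), (fst (snd p), snd (g (snd (fst p), snd (snd p)))))"

lemma pclif_kron0:
  assumes g: "\<And>q. \<exists>c. c \<noteq> 0 \<and> adj U ** pmq q ** U = smul c (pmq (g q))"
  shows "pclif (kron U (mat 1)) (lift0 g)"
  unfolding pclif_def
proof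
  fix p :: pauli
  obtain c where c: "c \<noteq> 0" "adj U ** pmq (fst (fst p), fst (snd p)) ** U = smul c (pmq (g (fst (fst p), fst (snd p))))"
    using g by blast
  have "adj (kron U (mat 1)) ** pmat p ** kron U (mat 1) = kron (adj U ** pm1 (fst (fst p)) (fst (snd p)) ** U) (pm1 (snd (fst p)) (snd (snd p)))"
    by (simp add: adj_kron pmat_def kron_mult)
  also have "\<dots> = smul c (pmat (lift0 g p))"
    using c(2) by (simp add: kron_smul_left pmat_def lift0_def)
  finally show "\<exists>c. c \<noteq> 0 \<and> adj (kron U (mat 1)) ** pmat p ** kron U (mat 1) = smul c (pmat (lift0 g p))"
    using c(1) by blast
qed

lemma pclif_kron1:
  assumes g: "\<And>q. \<exists>c. c \<noteq> 0 \<and> adj U ** pmq q ** U = smul c (pmq (g q))"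
  shows "pclif (kron (mat 1) U) (lift1 g)"
  unfolding pclif_def
proof
  fix p :: pauli
  obtain c where c: "c \<noteq> 0" "adj U ** pmq (snd (fst p), snd (snd p)) ** U = smul c (pmq (g (snd (fst p), snd (snd p))))"
    using g by blast
  have "adj (kron (mat 1) U) ** pmat p ** kron (mat 1) U = kron (pm1 (fst (fst p)) (fst (snd p))) (adj U ** pm1 (snd (fst p)) (snd (snd p)) ** U)"
    by (simp add: adj_kron pmat_def kron_mult)
  also have "\<dots> = smul c (pmat (lift1 g p))"
    using c(2) by (simp add: kron_smul_right pmat_def lift1_def)
  finally show "\<exists>c. c \<noteq> 0 \<and> adj (kron (mat 1) U) ** pmat p ** kron (mat 1) U = smul c (pmat (lift1 g p))"
    using c(1) by blast
qed

lemma unitary_kron: "unitary U \<Longrightarrow> unitary V \<Longrightarrow> unitary (kron U V)"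
  unfolding unitary_def by (simp add: adj_kron kron_mult kron_one)


lemma gm_mem: "phi GS \<in> Lmaps" "phi GH0 \<in> Lmaps" "phi GH1 \<in> Lmaps" "phi GP0 \<in> Lmaps" "phi GP1 \<in> Lmaps"
  by (rule Lmaps_gen; simp add: gmaps_def)+

lemma lift0_M0: "g (True,False) = (True,False) \<Longrightarrow> g (False,True) = (False,True) \<Longrightarrow> g (True,True) = (True,True) \<Longrightarrow> g (False,False) = (False,False) \<Longrightarrow> lift0 g \<in> Lmaps"
proof -
  assume g: "g (True,False) = (True,False)" "g (False,True) = (False,True)" "g (True,True) = (True,True)" "g (False,False) = (False,False)"
  have "lift0 g = id"
  proof (rule ext)
    fix p show "lift0 g p = (id) p"
      by (rule pauli_cases[of p]) (rename_tac z0 z1 x0 x1, case_tac z0; case_tac z1; case_tac x0; case_tac x1; simp add: lift0_def psimps g)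
  qed
  thus ?thesis by (simp add: gm_mem Lmaps_comp Lm_id)
qed

lemma lift0_M1: "g (True,False) = (False,True) \<Longrightarrow> g (False,True) = (True,False) \<Longrightarrow> g (True,True) = (True,True) \<Longrightarrow> g (False,False) = (False,False) \<Longrightarrow> lift0 g \<in> Lmaps"
proof -
  assume g: "g (True,False) = (False,True)" "g (False,True) = (True,False)" "g (True,True) = (True,True)" "g (False,False) = (False,False)"
  have "lift0 g = phi GH0"
  proof (rule ext)
    fix p show "lift0 g p = (phi GH0) p"
      by (rule pauli_cases[of p]) (rename_tac z0 z1 x0 x1, case_tac z0; case_tac z1; case_tac x0; case_tac x1; simp add: lift0_def psimps g)
  qed
  thus ?thesis by (simp add: gm_mem Lmaps_comp Lm_id)
qed

lemma lift0_M2: "g (True,False) = (True,False) \<Longrightarrow> g (False,True) = (True,True) \<Longrightarrow> g (True,True) = (False,True) \<Longrightarrow> g (False,False) = (False,False) \<Longrightarrow> lift0 g \<in> Lmaps"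
proof -
  assume g: "g (True,False) = (True,False)" "g (False,True) = (True,True)" "g (True,True) = (False,True)" "g (False,False) = (False,False)"
  have "lift0 g = phi GP0"
  proof (rule ext)
    fix p show "lift0 g p = (phi GP0) p"
      by (rule pauli_cases[of p]) (rename_tac z0 z1 x0 x1, case_tac z0; case_tac z1; case_tac x0; case_tac x1; simp add: lift0_def psimps g)
  qed
  thus ?thesis by (simp add: gm_mem Lmaps_comp Lm_id)
qed

lemma lift0_M3: "g (True,False) = (True,True) \<Longrightarrow> g (False,True) = (False,True) \<Longrightarrow> g (True,True) = (True,False) \<Longrightarrow> g (False,False) = (False,False) \<Longrightarrow> lift0 g \<in> Lmaps"
proof -
  assume g: "g (True,False) = (True,True)" "g (False,True) = (False,True)" "g (True,True) = (True,False)" "g (False,False) = (False,False)"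
  have "lift0 g = phi GH0 \<circ> phi GP0 \<circ> phi GH0"
  proof (rule ext)
    fix p show "lift0 g p = (phi GH0 \<circ> phi GP0 \<circ> phi GH0) p"
      by (rule pauli_cases[of p]) (rename_tac z0 z1 x0 x1, case_tac z0; case_tac z1; case_tac x0; case_tac x1; simp add: lift0_def psimps g)
  qed
  thus ?thesis by (simp add: gm_mem Lmaps_comp Lm_id)
qed

lemma lift0_M4: "g (True,False) = (False,True) \<Longrightarrow> g (False,True) = (True,True) \<Longrightarrow> g (True,True) = (True,False) \<Longrightarrow> g (False,False) = (False,False) \<Longrightarrow> lift0 g \<in> Lmaps"
proof -
  assume g: "g (True,False) = (False,True)" "g (False,True) = (True,True)" "g (True,True) = (True,False)" "g (False,False) = (False,False)"
  have "lift0 g = phi GH0 \<circ> phi GP0"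
  proof (rule ext)
    fix p show "lift0 g p = (phi GH0 \<circ> phi GP0) p"
      by (rule pauli_cases[of p]) (rename_tac z0 z1 x0 x1, case_tac z0; case_tac z1; case_tac x0; case_tac x1; simp add: lift0_def psimps g)
  qed
  thus ?thesis by (simp add: gm_mem Lmaps_comp Lm_id)
qed

lemma lift0_M5: "g (True,False) = (True,True) \<Longrightarrow> g (False,True) = (True,False) \<Longrightarrow> g (True,True) = (False,True) \<Longrightarrow> g (False,False) = (False,False) \<Longrightarrow> lift0 g \<in> Lmaps"
proof -
  assume g: "g (True,False) = (True,True)" "g (False,True) = (True,False)" "g (True,True) = (False,True)" "g (False,False) = (False,False)"
  have "lift0 g = phi GP0 \<circ> phi GH0"
  proof (rule ext)
    fix p show "lift0 g p = (phi GP0 \<circ> phi GH0) p"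
      by (rule pauli_cases[of p]) (rename_tac z0 z1 x0 x1, case_tac z0; case_tac z1; case_tac x0; case_tac x1; simp add: lift0_def psimps g)
  qed
  thus ?thesis by (simp add: gm_mem Lmaps_comp Lm_id)
qed

lemma lift0_mem: assumes bg: "bij g" and g0: "g (False,False) = (False,False)" shows "lift0 g \<in> Lmaps"
proof -
  have inj: "inj g" using bg by (rule bij_is_inj)
  have d: "g (True,False) \<noteq> g (False,False)" "g (False,True) \<noteq> g (False,False)" "g (True,True) \<noteq> g (False,False)"
     "g (True,False) \<noteq> g (False,True)" "g (True,False) \<noteq> g (True,True)" "g (False,True) \<noteq> g (True,True)"
    by (simp_all add: inj_eq[OF inj])
  obtain a1 a2 where ga: "g (True,False) = (a1,a2)" by (cases "g (True,False)")
  obtain b1 b2 where gb: "g (False,True) = (b1,b2)" by (cases "g (False,True)")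
  obtain c1 c2 where gc: "g (True,True) = (c1,c2)" by (cases "g (True,True)")
  show ?thesis using d ga gb gc g0
    by (cases a1; cases a2; cases b1; cases b2; cases c1; cases c2)
       (simp_all add: lift0_M0 lift0_M1 lift0_M2 lift0_M3 lift0_M4 lift0_M5)
qed

lemma lift1_M0: "g (True,False) = (True,False) \<Longrightarrow> g (False,True) = (False,True) \<Longrightarrow> g (True,True) = (True,True) \<Longrightarrow> g (False,False) = (False,False) \<Longrightarrow> lift1 g \<in> Lmaps"
proof -
  assume g: "g (True,False) = (True,False)" "g (False,True) = (False,True)" "g (True,True) = (True,True)" "g (False,False) = (False,False)"
  have "lift1 g = id"
  proof (rule ext)
    fix p show "lift1 g p = (id) p"
      by (rule pauli_cases[of p]) (rename_tac z0 z1 x0 x1, case_tac z0; case_tac z1; case_tac x0; case_tac x1; simp add: lift1_def psimps g)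
  qed
  thus ?thesis by (simp add: gm_mem Lmaps_comp Lm_id)
qed

lemma lift1_M1: "g (True,False) = (False,True) \<Longrightarrow> g (False,True) = (True,False) \<Longrightarrow> g (True,True) = (True,True) \<Longrightarrow> g (False,False) = (False,False) \<Longrightarrow> lift1 g \<in> Lmaps"
proof -
  assume g: "g (True,False) = (False,True)" "g (False,True) = (True,False)" "g (True,True) = (True,True)" "g (False,False) = (False,False)"
  have "lift1 g = phi GH1"
  proof (rule ext)
    fix p show "lift1 g p = (phi GH1) p"
      by (rule pauli_cases[of p]) (rename_tac z0 z1 x0 x1, case_tac z0; case_tac z1; case_tac x0; case_tac x1; simp add: lift1_def psimps g)
  qed
  thus ?thesis by (simp add: gm_mem Lmaps_comp Lm_id)
qed

lemma lift1_M2: "g (True,False) = (True,False) \<Longrightarrow> g (False,True) = (True,True) \<Longrightarrow> g (True,True) = (False,True) \<Longrightarrow> g (False,False) = (False,False) \<Longrightarrow> lift1 g \<in> Lmaps"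
proof -
  assume g: "g (True,False) = (True,False)" "g (False,True) = (True,True)" "g (True,True) = (False,True)" "g (False,False) = (False,False)"
  have "lift1 g = phi GP1"
  proof (rule ext)
    fix p show "lift1 g p = (phi GP1) p"
      by (rule pauli_cases[of p]) (rename_tac z0 z1 x0 x1, case_tac z0; case_tac z1; case_tac x0; case_tac x1; simp add: lift1_def psimps g)
  qed
  thus ?thesis by (simp add: gm_mem Lmaps_comp Lm_id)
qed

lemma lift1_M3: "g (True,False) = (True,True) \<Longrightarrow> g (False,True) = (False,True) \<Longrightarrow> g (True,True) = (True,False) \<Longrightarrow> g (False,False) = (False,False) \<Longrightarrow> lift1 g \<in> Lmaps"
proof -
  assume g: "g (True,False) = (True,True)" "g (False,True) = (False,True)" "g (True,True) = (True,False)" "g (False,False) = (False,False)"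
  have "lift1 g = phi GH1 \<circ> phi GP1 \<circ> phi GH1"
  proof (rule ext)
    fix p show "lift1 g p = (phi GH1 \<circ> phi GP1 \<circ> phi GH1) p"
      by (rule pauli_cases[of p]) (rename_tac z0 z1 x0 x1, case_tac z0; case_tac z1; case_tac x0; case_tac x1; simp add: lift1_def psimps g)
  qed
  thus ?thesis by (simp add: gm_mem Lmaps_comp Lm_id)
qed

lemma lift1_M4: "g (True,False) = (False,True) \<Longrightarrow> g (False,True) = (True,True) \<Longrightarrow> g (True,True) = (True,False) \<Longrightarrow> g (False,False) = (False,False) \<Longrightarrow> lift1 g \<in> Lmaps"
proof -
  assume g: "g (True,False) = (False,True)" "g (False,True) = (True,True)" "g (True,True) = (True,False)" "g (False,False) = (False,False)"
  have "lift1 g = phi GH1 \<circ> phi GP1"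
  proof (rule ext)
    fix p show "lift1 g p = (phi GH1 \<circ> phi GP1) p"
      by (rule pauli_cases[of p]) (rename_tac z0 z1 x0 x1, case_tac z0; case_tac z1; case_tac x0; case_tac x1; simp add: lift1_def psimps g)
  qed
  thus ?thesis by (simp add: gm_mem Lmaps_comp Lm_id)
qed

lemma lift1_M5: "g (True,False) = (True,True) \<Longrightarrow> g (False,True) = (True,False) \<Longrightarrow> g (True,True) = (False,True) \<Longrightarrow> g (False,False) = (False,False) \<Longrightarrow> lift1 g \<in> Lmaps"
proof -
  assume g: "g (True,False) = (True,True)" "g (False,True) = (True,False)" "g (True,True) = (False,True)" "g (False,False) = (False,False)"
  have "lift1 g = phi GP1 \<circ> phi GH1"
  proof (rule ext)
    fix p show "lift1 g p = (phi GP1 \<circ> phi GH1) p"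
      by (rule pauli_cases[of p]) (rename_tac z0 z1 x0 x1, case_tac z0; case_tac z1; case_tac x0; case_tac x1; simp add: lift1_def psimps g)
  qed
  thus ?thesis by (simp add: gm_mem Lmaps_comp Lm_id)
qed

lemma lift1_mem: assumes bg: "bij g" and g0: "g (False,False) = (False,False)" shows "lift1 g \<in> Lmaps"
proof -
  have inj: "inj g" using bg by (rule bij_is_inj)
  have d: "g (True,False) \<noteq> g (False,False)" "g (False,True) \<noteq> g (False,False)" "g (True,True) \<noteq> g (False,False)"
     "g (True,False) \<noteq> g (False,True)" "g (True,False) \<noteq> g (True,True)" "g (False,True) \<noteq> g (True,True)"
    by (simp_all add: inj_eq[OF inj])
  obtain a1 a2 where ga: "g (True,False) = (a1,a2)" by (cases "g (True,False)")
  obtain b1 b2 where gb: "g (False,True) = (b1,b2)" by (cases "g (False,True)")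
  obtain c1 c2 where gc: "g (True,True) = (c1,c2)" by (cases "g (True,True)")
  show ?thesis using d ga gb gc g0
    by (cases a1; cases a2; cases b1; cases b2; cases c1; cases c2)
       (simp_all add: lift1_M0 lift1_M1 lift1_M2 lift1_M3 lift1_M4 lift1_M5)
qed


abbreviation "hh \<equiv> complex_of_real (1 / sqrt 2)"
lemma ss: "complex_of_real (sqrt 2) * complex_of_real (sqrt 2) = 2"
proof -
  have "sqrt 2 * sqrt 2 = (2::real)" by simp
  hence "complex_of_real (sqrt 2 * sqrt 2) = 2" by simp
  thus ?thesis by (simp only: of_real_mult)
qed
lemma cnj_hh: "cnj hh = hh" by simp
lemma had_m2: "hadamard = m2 hh hh hh (-hh)" unfolding m2_eq by (simp add: hadamard_def)

lemma w1: "cis (pi/4) * cis (pi/4) = \<i>"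
proof -
  have "cis (pi/4) * cis (pi/4) = cis (pi/2)" by (simp add: cis_mult)
  thus ?thesis by simp
qed
lemma w2: "cis (-(pi/4)) * cis (-(pi/4)) = -\<i>"
proof -
  have "cis (-(pi/4)) * cis (-(pi/4)) = cis (-(pi/2))" by (simp add: cis_mult)
  also have "\<dots> = cnj (cis (pi/2))" by (simp add: cis_cnj)
  finally show ?thesis by simp
qed
lemma w3: "cis (pi/4) * cis (-(pi/4)) = 1" "cis (-(pi/4)) * cis (pi/4) = 1"
  by (simp_all add: cis_mult)
lemma wc: "cnj (cis (pi/4)) = cis (-(pi/4))" "cnj (cis (-(pi/4))) = cis (pi/4)"
  by (simp_all add: cis_cnj)
lemma ph_m2: "phaseP = m2 (cis (-(pi/4))) 0 0 (cis (pi/4))" unfolding m2_eq by (simp add: phaseP_def)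

lemma had_conj: "adj hadamard ** pmq q ** hadamard = smul (if fst q \<and> snd q then -1 else 1) (pmq (snd q, fst q))"
  by (cases q; rename_tac a b; case_tac a; case_tac b)
     (simp_all add: had_m2 pm1_m2 m2_adj m2_mult m2_smul m2_eq_iff ss algebra_simps)

lemma ph_conj: "adj phaseP ** pmq q ** phaseP = smul (if snd q then \<i> else 1) (pmq (fst q \<noteq> snd q, snd q))"
  by (cases q; rename_tac a b; case_tac a; case_tac b)
     (simp_all add: ph_m2 pm1_m2 m2_adj m2_mult m2_smul m2_eq_iff w1 w2 w3 wc algebra_simps)

lemmas gsimps = ctrl_def pX_m2 pY_m2 pZ_m2 I2_m2 I4_m4 pmat_def pm1_m2 Zq_def Xq_def bit2_def
  m2_kron m4_madd m4_smul m4_mult m4_adj m4_eq_iff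

lemma ctrl_CX: "ctrl pZ pX = CX01"
  apply (subst (2) m4_expand)
  apply (simp add: ctrl_def pX_m2 pZ_m2 I2_m2 I4_m4 m2_kron m4_madd m4_smul m4_mult CX01_def)
  done

lemma modphase_eq1: "modphase (pmat q) = q"
  using modphase_eq[of 1 q] by simp

lemma unitary_CX: "unitary CX01"
  unfolding ctrl_CX[symmetric] unitary_def by (simp add: gsimps)

lemma conj_XX_0: "adj (ctrl pX pX) ** pmat (Zq 0) ** ctrl pX pX = smul (1) (pmat ((True,False),(False,True)))"
  by (simp add: gsimps)

lemma conj_XX_1: "adj (ctrl pX pX) ** pmat (Xq 0) ** ctrl pX pX = smul (1) (pmat ((False,False),(True,False)))"
  by (simp add: gsimps)

lemma conj_XX_2: "adj (ctrl pX pX) ** pmat (Zq 1) ** ctrl pX pX = smul (1) (pmat ((False,True),(True,False)))"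
  by (simp add: gsimps)

lemma conj_XX_3: "adj (ctrl pX pX) ** pmat (Xq 1) ** ctrl pX pX = smul (1) (pmat ((False,False),(False,True)))"
  by (simp add: gsimps)

lemma Cf_XX: "bact (ctrl pX pX) B0 = ((((True,False),(False,True)), ((False,False),(True,False))), (((False,True),(True,False)), ((False,False),(False,True))))"
  by (simp only: bact_def conj_XX_0 conj_XX_1 conj_XX_2 conj_XX_3) (simp add: phi_B0 modphase_eq modphase_eq1)

lemma conj_XY_0: "adj (ctrl pX pY) ** pmat (Zq 0) ** ctrl pX pY = smul (-\<i>) (pmat ((True,True),(False,True)))"
  by (simp add: gsimps)

lemma conj_XY_1: "adj (ctrl pX pY) ** pmat (Xq 0) ** ctrl pX pY = smul (1) (pmat ((False,False),(True,False)))"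
  by (simp add: gsimps)

lemma conj_XY_2: "adj (ctrl pX pY) ** pmat (Zq 1) ** ctrl pX pY = smul (1) (pmat ((False,True),(True,False)))"
  by (simp add: gsimps)

lemma conj_XY_3: "adj (ctrl pX pY) ** pmat (Xq 1) ** ctrl pX pY = smul (1) (pmat ((False,False),(True,True)))"
  by (simp add: gsimps)

lemma Cf_XY: "bact (ctrl pX pY) B0 = ((((True,True),(False,True)), ((False,False),(True,False))), (((False,True),(True,False)), ((False,False),(True,True))))"
  by (simp only: bact_def conj_XY_0 conj_XY_1 conj_XY_2 conj_XY_3) (simp add: phi_B0 modphase_eq modphase_eq1)

lemma conj_XZ_0: "adj (ctrl pX pZ) ** pmat (Zq 0) ** ctrl pX pZ = smul (1) (pmat ((True,True),(False,False)))"
  by (simp add: gsimps)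

lemma conj_XZ_1: "adj (ctrl pX pZ) ** pmat (Xq 0) ** ctrl pX pZ = smul (1) (pmat ((False,False),(True,False)))"
  by (simp add: gsimps)

lemma conj_XZ_2: "adj (ctrl pX pZ) ** pmat (Zq 1) ** ctrl pX pZ = smul (1) (pmat ((False,True),(False,False)))"
  by (simp add: gsimps)

lemma conj_XZ_3: "adj (ctrl pX pZ) ** pmat (Xq 1) ** ctrl pX pZ = smul (1) (pmat ((False,False),(True,True)))"
  by (simp add: gsimps)

lemma Cf_XZ: "bact (ctrl pX pZ) B0 = ((((True,True),(False,False)), ((False,False),(True,False))), (((False,True),(False,False)), ((False,False),(True,True))))"
  by (simp only: bact_def conj_XZ_0 conj_XZ_1 conj_XZ_2 conj_XZ_3) (simp add: phi_B0 modphase_eq modphase_eq1)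

lemma conj_YX_0: "adj (ctrl pY pX) ** pmat (Zq 0) ** ctrl pY pX = smul (1) (pmat ((True,False),(False,True)))"
  by (simp add: gsimps)

lemma conj_YX_1: "adj (ctrl pY pX) ** pmat (Xq 0) ** ctrl pY pX = smul (1) (pmat ((False,False),(True,True)))"
  by (simp add: gsimps)

lemma conj_YX_2: "adj (ctrl pY pX) ** pmat (Zq 1) ** ctrl pY pX = smul (-\<i>) (pmat ((True,True),(True,False)))"
  by (simp add: gsimps)

lemma conj_YX_3: "adj (ctrl pY pX) ** pmat (Xq 1) ** ctrl pY pX = smul (1) (pmat ((False,False),(False,True)))"
  by (simp add: gsimps)

lemma Cf_YX: "bact (ctrl pY pX) B0 = ((((True,False),(False,True)), ((False,False),(True,True))), (((True,True),(True,False)), ((False,False),(False,True))))"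
  by (simp only: bact_def conj_YX_0 conj_YX_1 conj_YX_2 conj_YX_3) (simp add: phi_B0 modphase_eq modphase_eq1)

lemma conj_YY_0: "adj (ctrl pY pY) ** pmat (Zq 0) ** ctrl pY pY = smul (-\<i>) (pmat ((True,True),(False,True)))"
  by (simp add: gsimps)

lemma conj_YY_1: "adj (ctrl pY pY) ** pmat (Xq 0) ** ctrl pY pY = smul (-\<i>) (pmat ((False,True),(True,True)))"
  by (simp add: gsimps)

lemma conj_YY_2: "adj (ctrl pY pY) ** pmat (Zq 1) ** ctrl pY pY = smul (-\<i>) (pmat ((True,True),(True,False)))"
  by (simp add: gsimps)

lemma conj_YY_3: "adj (ctrl pY pY) ** pmat (Xq 1) ** ctrl pY pY = smul (-\<i>) (pmat ((True,False),(True,True)))"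
  by (simp add: gsimps)

lemma Cf_YY: "bact (ctrl pY pY) B0 = ((((True,True),(False,True)), ((False,True),(True,True))), (((True,True),(True,False)), ((True,False),(True,True))))"
  by (simp only: bact_def conj_YY_0 conj_YY_1 conj_YY_2 conj_YY_3) (simp add: phi_B0 modphase_eq modphase_eq1)

lemma conj_YZ_0: "adj (ctrl pY pZ) ** pmat (Zq 0) ** ctrl pY pZ = smul (1) (pmat ((True,True),(False,False)))"
  by (simp add: gsimps)

lemma conj_YZ_1: "adj (ctrl pY pZ) ** pmat (Xq 0) ** ctrl pY pZ = smul (1) (pmat ((False,True),(True,False)))"
  by (simp add: gsimps)

lemma conj_YZ_2: "adj (ctrl pY pZ) ** pmat (Zq 1) ** ctrl pY pZ = smul (1) (pmat ((False,True),(False,False)))"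
  by (simp add: gsimps)

lemma conj_YZ_3: "adj (ctrl pY pZ) ** pmat (Xq 1) ** ctrl pY pZ = smul (-\<i>) (pmat ((True,False),(True,True)))"
  by (simp add: gsimps)

lemma Cf_YZ: "bact (ctrl pY pZ) B0 = ((((True,True),(False,False)), ((False,True),(True,False))), (((False,True),(False,False)), ((True,False),(True,True))))"
  by (simp only: bact_def conj_YZ_0 conj_YZ_1 conj_YZ_2 conj_YZ_3) (simp add: phi_B0 modphase_eq modphase_eq1)

lemma conj_ZX_0: "adj (ctrl pZ pX) ** pmat (Zq 0) ** ctrl pZ pX = smul (1) (pmat ((True,False),(False,False)))"
  by (simp add: gsimps)

lemma conj_ZX_1: "adj (ctrl pZ pX) ** pmat (Xq 0) ** ctrl pZ pX = smul (1) (pmat ((False,False),(True,True)))"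
  by (simp add: gsimps)

lemma conj_ZX_2: "adj (ctrl pZ pX) ** pmat (Zq 1) ** ctrl pZ pX = smul (1) (pmat ((True,True),(False,False)))"
  by (simp add: gsimps)

lemma conj_ZX_3: "adj (ctrl pZ pX) ** pmat (Xq 1) ** ctrl pZ pX = smul (1) (pmat ((False,False),(False,True)))"
  by (simp add: gsimps)

lemma Cf_ZX: "bact (ctrl pZ pX) B0 = ((((True,False),(False,False)), ((False,False),(True,True))), (((True,True),(False,False)), ((False,False),(False,True))))"
  by (simp only: bact_def conj_ZX_0 conj_ZX_1 conj_ZX_2 conj_ZX_3) (simp add: phi_B0 modphase_eq modphase_eq1)

lemma conj_ZY_0: "adj (ctrl pZ pY) ** pmat (Zq 0) ** ctrl pZ pY = smul (1) (pmat ((True,False),(False,False)))"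
  by (simp add: gsimps)

lemma conj_ZY_1: "adj (ctrl pZ pY) ** pmat (Xq 0) ** ctrl pZ pY = smul (-\<i>) (pmat ((False,True),(True,True)))"
  by (simp add: gsimps)

lemma conj_ZY_2: "adj (ctrl pZ pY) ** pmat (Zq 1) ** ctrl pZ pY = smul (1) (pmat ((True,True),(False,False)))"
  by (simp add: gsimps)

lemma conj_ZY_3: "adj (ctrl pZ pY) ** pmat (Xq 1) ** ctrl pZ pY = smul (1) (pmat ((True,False),(False,True)))"
  by (simp add: gsimps)

lemma Cf_ZY: "bact (ctrl pZ pY) B0 = ((((True,False),(False,False)), ((False,True),(True,True))), (((True,True),(False,False)), ((True,False),(False,True))))"
  by (simp only: bact_def conj_ZY_0 conj_ZY_1 conj_ZY_2 conj_ZY_3) (simp add: phi_B0 modphase_eq modphase_eq1)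

lemma conj_ZZ_0: "adj (ctrl pZ pZ) ** pmat (Zq 0) ** ctrl pZ pZ = smul (1) (pmat ((True,False),(False,False)))"
  by (simp add: gsimps)

lemma conj_ZZ_1: "adj (ctrl pZ pZ) ** pmat (Xq 0) ** ctrl pZ pZ = smul (1) (pmat ((False,True),(True,False)))"
  by (simp add: gsimps)

lemma conj_ZZ_2: "adj (ctrl pZ pZ) ** pmat (Zq 1) ** ctrl pZ pZ = smul (1) (pmat ((False,True),(False,False)))"
  by (simp add: gsimps)

lemma conj_ZZ_3: "adj (ctrl pZ pZ) ** pmat (Xq 1) ** ctrl pZ pZ = smul (1) (pmat ((True,False),(False,True)))"
  by (simp add: gsimps)

lemma Cf_ZZ: "bact (ctrl pZ pZ) B0 = ((((True,False),(False,False)), ((False,True),(True,False))), (((False,True),(False,False)), ((True,False),(False,True))))"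
  by (simp only: bact_def conj_ZZ_0 conj_ZZ_1 conj_ZZ_2 conj_ZZ_3) (simp add: phi_B0 modphase_eq modphase_eq1)


lemma lH0: "lift0 (\<lambda>q. (snd q, fst q)) = phi GH0"
proof (rule ext)
  fix p show "lift0 (\<lambda>q. (snd q, fst q)) p = phi GH0 p"
    by (rule pauli_cases[of p]) (rename_tac z0 z1 x0 x1, case_tac z0; case_tac z1; case_tac x0; case_tac x1; simp add: lift0_def psimps)
qed

lemma lH1: "lift1 (\<lambda>q. (snd q, fst q)) = phi GH1"
proof (rule ext)
  fix p show "lift1 (\<lambda>q. (snd q, fst q)) p = phi GH1 p"
    by (rule pauli_cases[of p]) (rename_tac z0 z1 x0 x1, case_tac z0; case_tac z1; case_tac x0; case_tac x1; simp add: lift1_def psimps)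
qed

lemma lP0: "lift0 (\<lambda>q. (fst q \<noteq> snd q, snd q)) = phi GP0"
proof (rule ext)
  fix p show "lift0 (\<lambda>q. (fst q \<noteq> snd q, snd q)) p = phi GP0 p"
    by (rule pauli_cases[of p]) (rename_tac z0 z1 x0 x1, case_tac z0; case_tac z1; case_tac x0; case_tac x1; simp add: lift0_def psimps)
qed

lemma lP1: "lift1 (\<lambda>q. (fst q \<noteq> snd q, snd q)) = phi GP1"
proof (rule ext)
  fix p show "lift1 (\<lambda>q. (fst q \<noteq> snd q, snd q)) p = phi GP1 p"
    by (rule pauli_cases[of p]) (rename_tac z0 z1 x0 x1, case_tac z0; case_tac z1; case_tac x0; case_tac x1; simp add: lift1_def psimps)
qed

lemma had_ex: "\<exists>c. c \<noteq> 0 \<and> adj hadamard ** pmq q ** hadamard = smul c (pmq (snd q, fst q))"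
  by (rule exI[of _ "if fst q \<and> snd q then -1 else 1"]) (simp add: had_conj)
lemma ph_ex: "\<exists>c. c \<noteq> 0 \<and> adj phaseP ** pmq q ** phaseP = smul c (pmq (fst q \<noteq> snd q, snd q))"
  by (rule exI[of _ "if snd q then \<i> else 1"]) (simp add: ph_conj)

lemma pclif_swap: "pclif SWAP (phi GS)"
  unfolding pclif_def
proof
  fix p :: pauli
  show "\<exists>c. c \<noteq> 0 \<and> adj SWAP ** pmat p ** SWAP = smul c (pmat (phi GS p))"
    by (rule pauli_cases[of p], rule exI[of _ 1]) (simp add: adj_swap pmat_def swap_conj phi_GS)
qed

lemma pclif_gens: "pclif SWAP (phi GS)" "pclif (kron hadamard (mat 1)) (phi GH0)"
  "pclif (kron (mat 1) hadamard) (phi GH1)" "pclif (kron phaseP (mat 1)) (phi GP0)"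
  "pclif (kron (mat 1) phaseP) (phi GP1)"
  by (rule pclif_swap, subst lH0[symmetric], rule pclif_kron0[OF had_ex], subst lH1[symmetric], rule pclif_kron1[OF had_ex],
      subst lP0[symmetric], rule pclif_kron0[OF ph_ex], subst lP1[symmetric], rule pclif_kron1[OF ph_ex])

lemma bact_pclif: "pclif V h \<Longrightarrow> bact V = ract h"
  by (rule ext) (simp add: bact_mk pclif_Sm ract_def)

lemma egens_cases: "g \<in> egens \<Longrightarrow> \<exists>s\<in>gmaps. bact g = ract s"
  unfolding egens_def gmaps_def using pclif_gens bact_pclif by blast

lemma gmaps_cases: "s \<in> gmaps \<Longrightarrow> \<exists>g\<in>egens. bact g = ract s"
  unfolding egens_def gmaps_def using pclif_gens bact_pclif by blast

lemma ract_invol: "s \<in> gmaps \<Longrightarrow> ract s (ract s F) = F"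
  by (simp add: ract_ract gm_lin gm_invol ract_id)

lemma inv_bact: assumes "g \<in> egens" shows "inv (bact g) = bact g"
proof -
  obtain s where s: "s \<in> gmaps" "bact g = ract s" using egens_cases[OF assms] by blast
  show ?thesis unfolding s(2) by (rule inv_unique_comp) (simp_all add: fun_eq_iff ract_invol[OF s(1)])
qed

lemma bact_Ebar: "g \<in> egens \<Longrightarrow> bact g \<in> Ebar"
  using Ebar_gen[OF Ebar_id] by fastforce

lemma Ebar_comp: "\<gamma> \<in> Ebar \<Longrightarrow> \<delta> \<in> Ebar \<Longrightarrow> \<gamma> \<circ> \<delta> \<in> Ebar"
  by (induction rule: Ebar.induct) (auto simp: comp_assoc intro: Ebar_gen Ebar_inv)

lemma Ebar_ract: "\<gamma> \<in> Ebar \<Longrightarrow> \<exists>f. (\<forall>F. \<gamma> F = f F) \<and> True"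
  by blast

lemma Ebar_lact: assumes "\<gamma> \<in> Ebar" "plin t" shows "lact t (\<gamma> F) = \<gamma> (lact t F)"
  using assms(1)
proof (induction arbitrary: F rule: Ebar.induct)
  case Ebar_id thus ?case by simp
next
  case (Ebar_gen \<gamma> g)
  obtain s where s: "s \<in> gmaps" "bact g = ract s" using egens_cases[OF Ebar_gen.hyps(2)] by blast
  show ?case using Ebar_gen.IH by (simp add: s lact_ract gm_lin assms(2))
next
  case (Ebar_inv \<gamma> g)
  obtain s where s: "s \<in> gmaps" "bact g = ract s" using egens_cases[OF Ebar_inv.hyps(2)] by blast
  have i: "inv (bact g) = ract s" using inv_bact[OF Ebar_inv.hyps(2)] s(2) by simp
  show ?case unfolding i comp_apply using Ebar_inv.IH by (simp add: lact_ract gm_lin s(1) assms(2))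
qed


lemma phi_Zq0: "phi F (Zq 0) = fst (fst F)" by (simp add: phi_def fr_def Zq_def bit2_def)
lemma phi_Xq0: "phi F (Xq 0) = snd (fst F)" by (simp add: phi_def fr_def Xq_def bit2_def)
lemma phi_Zq1: "phi F (Zq 1) = fst (snd F)" by (simp add: phi_def fr_def Zq_def bit2_def)
lemma phi_Xq1: "phi F (Xq 1) = snd (snd F)" by (simp add: phi_def fr_def Xq_def bit2_def)
lemma phi_padd: "phi F (padd p q) = padd (phi F p) (phi F q)"
  using phi_lin[of F] unfolding plin_def by blast

definition code :: "pauli \<Rightarrow> nat" where
  "code p = (if fst (fst p) then 1 else 0) + (if snd (fst p) then 2 else 0) + (if fst (snd p) then 4 else 0) + (if snd (snd p) then 8 else 0)"
definition msk :: "pauli \<Rightarrow> pauli \<Rightarrow> nat" where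
  "msk a b = 2 ^ code a + 2 ^ code b + 2 ^ code (padd a b)"
definition key :: "frame \<Rightarrow> nat \<times> nat" where
  "key F = (min (msk (fst (fst F)) (snd (fst F))) (msk (fst (snd F)) (snd (snd F))),
            max (msk (fst (fst F)) (snd (fst F))) (msk (fst (snd F)) (snd (snd F))))"

lemma msk_comm: "msk b a = msk a b" by (simp add: msk_def padd_comm add_ac)
lemma msk_p: "msk a (padd a b) = msk a b" by (simp add: msk_def add_ac)

lemma ract_conc: "ract (phi G) F = ((phi F (fst (fst G)), phi F (snd (fst G))), (phi F (fst (snd G)), phi F (snd (snd G))))"
  by (simp only: ract_def mk_def comp_apply phi_Zq0 phi_Xq0 phi_Zq1 phi_Xq1)

lemma key_ract: assumes "s \<in> gmaps" shows "key (ract s F) = key F"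
proof -
  obtain a b c d where F: "F = ((a,b),(c,d))" by (metis prod.exhaust)
  show ?thesis using assms unfolding gmaps_def
    by (elim insertE emptyE; simp only: ract_conc Gdefs F phi_padd phi_Zq0 phi_Xq0 phi_Zq1 phi_Xq1 fst_conv snd_conv key_def)
       (simp_all add: msk_comm msk_p min.commute max.commute)
qed

lemma Ebar_key: "\<gamma> \<in> Ebar \<Longrightarrow> key (\<gamma> F) = key F"
proof (induction arbitrary: F rule: Ebar.induct)
  case Ebar_id thus ?case by simp
next
  case (Ebar_gen \<gamma> g)
  obtain s where s: "s \<in> gmaps" "bact g = ract s" using egens_cases[OF Ebar_gen.hyps(2)] by blast
  show ?case using Ebar_gen.IH by (simp add: s key_ract)
next
  case (Ebar_inv \<gamma> g)
  obtain s where s: "s \<in> gmaps" "bact g = ract s" using egens_cases[OF Ebar_inv.hyps(2)] by blast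
  have i: "inv (bact g) = ract s" using inv_bact[OF Ebar_inv.hyps(2)] s(2) by simp
  show ?case unfolding i comp_apply using Ebar_inv.IH by (simp add: key_ract s(1))
qed

lemma class_key: "eef_class A = eef_class B \<Longrightarrow> key A = key B"
proof -
  assume e: "eef_class A = eef_class B"
  have "B \<in> eef_class B" unfolding eef_class_def mem_Collect_eq by (rule exI[of _ id]) (simp add: Ebar_id)
  hence "B \<in> eef_class A" using e by simp
  then obtain \<gamma> where "\<gamma> \<in> Ebar" "B = \<gamma> A" unfolding eef_class_def by blast
  thus ?thesis using Ebar_key by simp
qed

lemma LocCliff_prop: "L \<in> LocCliff \<Longrightarrow> unitary L \<and> (\<exists>h\<in>Lmaps. pclif L h)"
proof (induction rule: LocCliff.induct)
  case LC_one thus ?case using unitary_one pclif_one Lm_id by blast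
next
  case LC_swap
  have "unitary SWAP" by (simp add: unitary_def adj_swap swap_swap)
  thus ?case using pclif_swap gm_mem by blast
next
  case (LC_q0 U)
  obtain g where g: "bij g" "g (False,False) = (False,False)" "\<forall>q. \<exists>c. c \<noteq> 0 \<and> adj U ** pmq q ** U = smul c (pmq (g q))"
    using cliff1_struct[OF LC_q0] by blast
  have "unitary U" using LC_q0 unfolding clifford1_def by blast
  hence "unitary (kron U (mat 1))" by (simp add: unitary_kron unitary_one)
  moreover have "pclif (kron U (mat 1)) (lift0 g)" using g(3) by (intro pclif_kron0) blast
  ultimately show ?case using lift0_mem[OF g(1,2)] by blast
next
  case (LC_q1 U)
  obtain g where g: "bij g" "g (False,False) = (False,False)" "\<forall>q. \<exists>c. c \<noteq> 0 \<and> adj U ** pmq q ** U = smul c (pmq (g q))"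
    using cliff1_struct[OF LC_q1] by blast
  have "unitary U" using LC_q1 unfolding clifford1_def by blast
  hence "unitary (kron (mat 1) U)" by (simp add: unitary_kron unitary_one)
  moreover have "pclif (kron (mat 1) U) (lift1 g)" using g(3) by (intro pclif_kron1) blast
  ultimately show ?case using lift1_mem[OF g(1,2)] by blast
next
  case (LC_mult A B)
  obtain h where h: "h \<in> Lmaps" "pclif A h" using LC_mult.IH(1) by blast
  obtain k where k: "k \<in> Lmaps" "pclif B k" using LC_mult.IH(2) by blast
  have "pclif (A ** B) (k \<circ> h)" by (rule pclif_mult[OF h(2) k(2)])
  moreover have "k \<circ> h \<in> Lmaps" by (rule Lmaps_comp[OF k(1) h(1)])
  ultimately show ?case using LC_mult.IH unitary_mult by blast
next
  case (LC_adj A)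
  obtain h where h: "h \<in> Lmaps" "pclif A h" using LC_adj.IH by blast
  have "pclif (adj A) (inv h)" using pclif_adj[OF _ h(2)] LC_adj.IH by blast
  moreover have "inv h \<in> Lmaps" by (rule Lmaps_inv[OF h(1)])
  ultimately show ?case using LC_adj.IH unitary_adj by blast
qed

lemma key_XX: "key (bact (ctrl pX pX) B0) = (8720, 16704)"
  by (simp add: Cf_XX key_def msk_def code_def padd_def)

lemma key_XY: "key (bact (ctrl pX pY) B0) = (5184, 34832)"
  by (simp add: Cf_XY key_def msk_def code_def padd_def)

lemma key_XZ: "key (bact (ctrl pX pZ) B0) = (152, 20484)"
  by (simp add: Cf_XZ key_def msk_def code_def padd_def)

lemma key_YX: "key (bact (ctrl pY pX) B0) = (4640, 33152)"
  by (simp add: Cf_YX key_def msk_def code_def padd_def)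

lemma key_YY: "key (bact (ctrl pY pY) B0) = (9344, 18464)"
  by (simp add: Cf_YY key_def msk_def code_def padd_def)

lemma key_YZ: "key (bact (ctrl pY pZ) B0) = (104, 40964)"
  by (simp add: Cf_YZ key_def msk_def code_def padd_def)

lemma key_ZX: "key (bact (ctrl pZ pX) B0) = (2312, 12290)"
  by (simp add: Cf_ZX key_def msk_def code_def padd_def)

lemma key_ZY: "key (bact (ctrl pZ pY) B0) = (1544, 49154)"
  by (simp add: Cf_ZY key_def msk_def code_def padd_def)

lemma key_ZZ: "key (bact (ctrl pZ pZ) B0) = (194, 2564)"
  by (simp add: Cf_ZZ key_def msk_def code_def padd_def)

lemma key_B0: "key B0 = (50, 1284)"
  by (simp add: B0_def Zq_def Xq_def bit2_def key_def msk_def code_def padd_def)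

lemma lc_XX_swp: "lact (phi GS) (bact (ctrl pX pX) B0) = ract (phi GS) (bact (ctrl pX pX) B0)"
  by (simp add: Cf_XX Cf_XX lact_def ract_def mk_def phi_Zq0 phi_Xq0 phi_Zq1 phi_Xq1 psimps)

lemma lc_XX_h0: "lact (phi GH0) (bact (ctrl pX pX) B0) = ract (phi GH0) (bact (ctrl pZ pX) B0)"
  by (simp add: Cf_XX Cf_ZX lact_def ract_def mk_def phi_Zq0 phi_Xq0 phi_Zq1 phi_Xq1 psimps)

lemma lc_XX_h1: "lact (phi GH1) (bact (ctrl pX pX) B0) = ract (phi GH1) (bact (ctrl pX pZ) B0)"
  by (simp add: Cf_XX Cf_XZ lact_def ract_def mk_def phi_Zq0 phi_Xq0 phi_Zq1 phi_Xq1 psimps)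

lemma lc_XX_p0: "lact (phi GP0) (bact (ctrl pX pX) B0) = ract (phi GP0) (bact (ctrl pY pX) B0)"
  by (simp add: Cf_XX Cf_YX lact_def ract_def mk_def phi_Zq0 phi_Xq0 phi_Zq1 phi_Xq1 psimps)

lemma lc_XX_p1: "lact (phi GP1) (bact (ctrl pX pX) B0) = ract (phi GP1) (bact (ctrl pX pY) B0)"
  by (simp add: Cf_XX Cf_XY lact_def ract_def mk_def phi_Zq0 phi_Xq0 phi_Zq1 phi_Xq1 psimps)

lemma lc_XY_swp: "lact (phi GS) (bact (ctrl pX pY) B0) = ract (phi GS) (bact (ctrl pY pX) B0)"
  by (simp add: Cf_XY Cf_YX lact_def ract_def mk_def phi_Zq0 phi_Xq0 phi_Zq1 phi_Xq1 psimps)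

lemma lc_XY_h0: "lact (phi GH0) (bact (ctrl pX pY) B0) = ract (phi GH0) (bact (ctrl pZ pY) B0)"
  by (simp add: Cf_XY Cf_ZY lact_def ract_def mk_def phi_Zq0 phi_Xq0 phi_Zq1 phi_Xq1 psimps)

lemma lc_XY_h1: "lact (phi GH1) (bact (ctrl pX pY) B0) = ract (phi GH1) (bact (ctrl pX pY) B0)"
  by (simp add: Cf_XY Cf_XY lact_def ract_def mk_def phi_Zq0 phi_Xq0 phi_Zq1 phi_Xq1 psimps)

lemma lc_XY_p0: "lact (phi GP0) (bact (ctrl pX pY) B0) = ract (phi GP0) (bact (ctrl pY pY) B0)"
  by (simp add: Cf_XY Cf_YY lact_def ract_def mk_def phi_Zq0 phi_Xq0 phi_Zq1 phi_Xq1 psimps)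

lemma lc_XY_p1: "lact (phi GP1) (bact (ctrl pX pY) B0) = ract (phi GP1) (bact (ctrl pX pX) B0)"
  by (simp add: Cf_XY Cf_XX lact_def ract_def mk_def phi_Zq0 phi_Xq0 phi_Zq1 phi_Xq1 psimps)

lemma lc_XZ_swp: "lact (phi GS) (bact (ctrl pX pZ) B0) = ract (phi GS) (bact (ctrl pZ pX) B0)"
  by (simp add: Cf_XZ Cf_ZX lact_def ract_def mk_def phi_Zq0 phi_Xq0 phi_Zq1 phi_Xq1 psimps)

lemma lc_XZ_h0: "lact (phi GH0) (bact (ctrl pX pZ) B0) = ract (phi GH0) (bact (ctrl pZ pZ) B0)"
  by (simp add: Cf_XZ Cf_ZZ lact_def ract_def mk_def phi_Zq0 phi_Xq0 phi_Zq1 phi_Xq1 psimps)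

lemma lc_XZ_h1: "lact (phi GH1) (bact (ctrl pX pZ) B0) = ract (phi GH1) (bact (ctrl pX pX) B0)"
  by (simp add: Cf_XZ Cf_XX lact_def ract_def mk_def phi_Zq0 phi_Xq0 phi_Zq1 phi_Xq1 psimps)

lemma lc_XZ_p0: "lact (phi GP0) (bact (ctrl pX pZ) B0) = ract (phi GP0) (bact (ctrl pY pZ) B0)"
  by (simp add: Cf_XZ Cf_YZ lact_def ract_def mk_def phi_Zq0 phi_Xq0 phi_Zq1 phi_Xq1 psimps)

lemma lc_XZ_p1: "lact (phi GP1) (bact (ctrl pX pZ) B0) = ract (phi GP1) (bact (ctrl pX pZ) B0)"
  by (simp add: Cf_XZ Cf_XZ lact_def ract_def mk_def phi_Zq0 phi_Xq0 phi_Zq1 phi_Xq1 psimps)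

lemma lc_YX_swp: "lact (phi GS) (bact (ctrl pY pX) B0) = ract (phi GS) (bact (ctrl pX pY) B0)"
  by (simp add: Cf_YX Cf_XY lact_def ract_def mk_def phi_Zq0 phi_Xq0 phi_Zq1 phi_Xq1 psimps)

lemma lc_YX_h0: "lact (phi GH0) (bact (ctrl pY pX) B0) = ract (phi GH0) (bact (ctrl pY pX) B0)"
  by (simp add: Cf_YX Cf_YX lact_def ract_def mk_def phi_Zq0 phi_Xq0 phi_Zq1 phi_Xq1 psimps)

lemma lc_YX_h1: "lact (phi GH1) (bact (ctrl pY pX) B0) = ract (phi GH1) (bact (ctrl pY pZ) B0)"
  by (simp add: Cf_YX Cf_YZ lact_def ract_def mk_def phi_Zq0 phi_Xq0 phi_Zq1 phi_Xq1 psimps)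

lemma lc_YX_p0: "lact (phi GP0) (bact (ctrl pY pX) B0) = ract (phi GP0) (bact (ctrl pX pX) B0)"
  by (simp add: Cf_YX Cf_XX lact_def ract_def mk_def phi_Zq0 phi_Xq0 phi_Zq1 phi_Xq1 psimps)

lemma lc_YX_p1: "lact (phi GP1) (bact (ctrl pY pX) B0) = ract (phi GP1) (bact (ctrl pY pY) B0)"
  by (simp add: Cf_YX Cf_YY lact_def ract_def mk_def phi_Zq0 phi_Xq0 phi_Zq1 phi_Xq1 psimps)

lemma lc_YY_swp: "lact (phi GS) (bact (ctrl pY pY) B0) = ract (phi GS) (bact (ctrl pY pY) B0)"
  by (simp add: Cf_YY Cf_YY lact_def ract_def mk_def phi_Zq0 phi_Xq0 phi_Zq1 phi_Xq1 psimps)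

lemma lc_YY_h0: "lact (phi GH0) (bact (ctrl pY pY) B0) = ract (phi GH0) (bact (ctrl pY pY) B0)"
  by (simp add: Cf_YY Cf_YY lact_def ract_def mk_def phi_Zq0 phi_Xq0 phi_Zq1 phi_Xq1 psimps)

lemma lc_YY_h1: "lact (phi GH1) (bact (ctrl pY pY) B0) = ract (phi GH1) (bact (ctrl pY pY) B0)"
  by (simp add: Cf_YY Cf_YY lact_def ract_def mk_def phi_Zq0 phi_Xq0 phi_Zq1 phi_Xq1 psimps)

lemma lc_YY_p0: "lact (phi GP0) (bact (ctrl pY pY) B0) = ract (phi GP0) (bact (ctrl pX pY) B0)"
  by (simp add: Cf_YY Cf_XY lact_def ract_def mk_def phi_Zq0 phi_Xq0 phi_Zq1 phi_Xq1 psimps)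

lemma lc_YY_p1: "lact (phi GP1) (bact (ctrl pY pY) B0) = ract (phi GP1) (bact (ctrl pY pX) B0)"
  by (simp add: Cf_YY Cf_YX lact_def ract_def mk_def phi_Zq0 phi_Xq0 phi_Zq1 phi_Xq1 psimps)

lemma lc_YZ_swp: "lact (phi GS) (bact (ctrl pY pZ) B0) = ract (phi GS) (bact (ctrl pZ pY) B0)"
  by (simp add: Cf_YZ Cf_ZY lact_def ract_def mk_def phi_Zq0 phi_Xq0 phi_Zq1 phi_Xq1 psimps)

lemma lc_YZ_h0: "lact (phi GH0) (bact (ctrl pY pZ) B0) = ract (phi GH0) (bact (ctrl pY pZ) B0)"
  by (simp add: Cf_YZ Cf_YZ lact_def ract_def mk_def phi_Zq0 phi_Xq0 phi_Zq1 phi_Xq1 psimps)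

lemma lc_YZ_h1: "lact (phi GH1) (bact (ctrl pY pZ) B0) = ract (phi GH1) (bact (ctrl pY pX) B0)"
  by (simp add: Cf_YZ Cf_YX lact_def ract_def mk_def phi_Zq0 phi_Xq0 phi_Zq1 phi_Xq1 psimps)

lemma lc_YZ_p0: "lact (phi GP0) (bact (ctrl pY pZ) B0) = ract (phi GP0) (bact (ctrl pX pZ) B0)"
  by (simp add: Cf_YZ Cf_XZ lact_def ract_def mk_def phi_Zq0 phi_Xq0 phi_Zq1 phi_Xq1 psimps)

lemma lc_YZ_p1: "lact (phi GP1) (bact (ctrl pY pZ) B0) = ract (phi GP1) (bact (ctrl pY pZ) B0)"
  by (simp add: Cf_YZ Cf_YZ lact_def ract_def mk_def phi_Zq0 phi_Xq0 phi_Zq1 phi_Xq1 psimps)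

lemma lc_ZX_swp: "lact (phi GS) (bact (ctrl pZ pX) B0) = ract (phi GS) (bact (ctrl pX pZ) B0)"
  by (simp add: Cf_ZX Cf_XZ lact_def ract_def mk_def phi_Zq0 phi_Xq0 phi_Zq1 phi_Xq1 psimps)

lemma lc_ZX_h0: "lact (phi GH0) (bact (ctrl pZ pX) B0) = ract (phi GH0) (bact (ctrl pX pX) B0)"
  by (simp add: Cf_ZX Cf_XX lact_def ract_def mk_def phi_Zq0 phi_Xq0 phi_Zq1 phi_Xq1 psimps)

lemma lc_ZX_h1: "lact (phi GH1) (bact (ctrl pZ pX) B0) = ract (phi GH1) (bact (ctrl pZ pZ) B0)"
  by (simp add: Cf_ZX Cf_ZZ lact_def ract_def mk_def phi_Zq0 phi_Xq0 phi_Zq1 phi_Xq1 psimps)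

lemma lc_ZX_p0: "lact (phi GP0) (bact (ctrl pZ pX) B0) = ract (phi GP0) (bact (ctrl pZ pX) B0)"
  by (simp add: Cf_ZX Cf_ZX lact_def ract_def mk_def phi_Zq0 phi_Xq0 phi_Zq1 phi_Xq1 psimps)

lemma lc_ZX_p1: "lact (phi GP1) (bact (ctrl pZ pX) B0) = ract (phi GP1) (bact (ctrl pZ pY) B0)"
  by (simp add: Cf_ZX Cf_ZY lact_def ract_def mk_def phi_Zq0 phi_Xq0 phi_Zq1 phi_Xq1 psimps)

lemma lc_ZY_swp: "lact (phi GS) (bact (ctrl pZ pY) B0) = ract (phi GS) (bact (ctrl pY pZ) B0)"
  by (simp add: Cf_ZY Cf_YZ lact_def ract_def mk_def phi_Zq0 phi_Xq0 phi_Zq1 phi_Xq1 psimps)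

lemma lc_ZY_h0: "lact (phi GH0) (bact (ctrl pZ pY) B0) = ract (phi GH0) (bact (ctrl pX pY) B0)"
  by (simp add: Cf_ZY Cf_XY lact_def ract_def mk_def phi_Zq0 phi_Xq0 phi_Zq1 phi_Xq1 psimps)

lemma lc_ZY_h1: "lact (phi GH1) (bact (ctrl pZ pY) B0) = ract (phi GH1) (bact (ctrl pZ pY) B0)"
  by (simp add: Cf_ZY Cf_ZY lact_def ract_def mk_def phi_Zq0 phi_Xq0 phi_Zq1 phi_Xq1 psimps)

lemma lc_ZY_p0: "lact (phi GP0) (bact (ctrl pZ pY) B0) = ract (phi GP0) (bact (ctrl pZ pY) B0)"
  by (simp add: Cf_ZY Cf_ZY lact_def ract_def mk_def phi_Zq0 phi_Xq0 phi_Zq1 phi_Xq1 psimps)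

lemma lc_ZY_p1: "lact (phi GP1) (bact (ctrl pZ pY) B0) = ract (phi GP1) (bact (ctrl pZ pX) B0)"
  by (simp add: Cf_ZY Cf_ZX lact_def ract_def mk_def phi_Zq0 phi_Xq0 phi_Zq1 phi_Xq1 psimps)

lemma lc_ZZ_swp: "lact (phi GS) (bact (ctrl pZ pZ) B0) = ract (phi GS) (bact (ctrl pZ pZ) B0)"
  by (simp add: Cf_ZZ Cf_ZZ lact_def ract_def mk_def phi_Zq0 phi_Xq0 phi_Zq1 phi_Xq1 psimps)

lemma lc_ZZ_h0: "lact (phi GH0) (bact (ctrl pZ pZ) B0) = ract (phi GH0) (bact (ctrl pX pZ) B0)"
  by (simp add: Cf_ZZ Cf_XZ lact_def ract_def mk_def phi_Zq0 phi_Xq0 phi_Zq1 phi_Xq1 psimps)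

lemma lc_ZZ_h1: "lact (phi GH1) (bact (ctrl pZ pZ) B0) = ract (phi GH1) (bact (ctrl pZ pX) B0)"
  by (simp add: Cf_ZZ Cf_ZX lact_def ract_def mk_def phi_Zq0 phi_Xq0 phi_Zq1 phi_Xq1 psimps)

lemma lc_ZZ_p0: "lact (phi GP0) (bact (ctrl pZ pZ) B0) = ract (phi GP0) (bact (ctrl pZ pZ) B0)"
  by (simp add: Cf_ZZ Cf_ZZ lact_def ract_def mk_def phi_Zq0 phi_Xq0 phi_Zq1 phi_Xq1 psimps)

lemma lc_ZZ_p1: "lact (phi GP1) (bact (ctrl pZ pZ) B0) = ract (phi GP1) (bact (ctrl pZ pZ) B0)"
  by (simp add: Cf_ZZ Cf_ZZ lact_def ract_def mk_def phi_Zq0 phi_Xq0 phi_Zq1 phi_Xq1 psimps)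

lemmas lc_all = lc_XX_swp lc_XX_h0 lc_XX_h1 lc_XX_p0 lc_XX_p1 lc_XY_swp lc_XY_h0 lc_XY_h1 lc_XY_p0 lc_XY_p1 lc_XZ_swp lc_XZ_h0 lc_XZ_h1 lc_XZ_p0 lc_XZ_p1 lc_YX_swp lc_YX_h0 lc_YX_h1 lc_YX_p0 lc_YX_p1 lc_YY_swp lc_YY_h0 lc_YY_h1 lc_YY_p0 lc_YY_p1 lc_YZ_swp lc_YZ_h0 lc_YZ_h1 lc_YZ_p0 lc_YZ_p1 lc_ZX_swp lc_ZX_h0 lc_ZX_h1 lc_ZX_p0 lc_ZX_p1 lc_ZY_swp lc_ZY_h0 lc_ZY_h1 lc_ZY_p0 lc_ZY_p1 lc_ZZ_swp lc_ZZ_h0 lc_ZZ_h1 lc_ZZ_p0 lc_ZZ_p1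


definition Tset :: "frame set" where
  "Tset = {F. \<exists>\<sigma>\<in>paulis3. \<exists>\<tau>\<in>paulis3. F \<in> eef_class (bact (ctrl \<sigma> \<tau>) B0)}"

lemma Tin: "\<sigma> \<in> paulis3 \<Longrightarrow> \<tau> \<in> paulis3 \<Longrightarrow> \<gamma> \<in> Ebar \<Longrightarrow> \<gamma> (bact (ctrl \<sigma> \<tau>) B0) \<in> Tset"
  unfolding Tset_def eef_class_def by blast

lemma T_ract_gen: assumes s: "s \<in> gmaps" and F: "F \<in> Tset" shows "ract s F \<in> Tset"
proof -
  obtain g where g: "g \<in> egens" "bact g = ract s" using gmaps_cases[OF s] by blast
  from F obtain \<sigma> \<tau> \<gamma> where st: "\<sigma> \<in> paulis3" "\<tau> \<in> paulis3" "\<gamma> \<in> Ebar" "F = \<gamma> (bact (ctrl \<sigma> \<tau>) B0)"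
    unfolding Tset_def eef_class_def by blast
  have "ract s F = (bact g \<circ> \<gamma>) (bact (ctrl \<sigma> \<tau>) B0)" using st g by simp
  thus ?thesis using Tin[OF st(1,2) Ebar_gen[OF st(3) g(1)]] by simp
qed

lemma T_ract: "h \<in> Lmaps \<Longrightarrow> F \<in> Tset \<Longrightarrow> ract h F \<in> Tset"
proof (induction arbitrary: F rule: Lmaps.induct)
  case Lm_id thus ?case using ract_id[of F] by (simp add: id_def)
next
  case (Lm_step s h)
  have "ract h (ract s F) \<in> Tset" using Lm_step.IH T_ract_gen[OF Lm_step.hyps(1) Lm_step.prems] by simp
  thus ?case using ract_ract[of s h F] gm_lin[OF Lm_step.hyps(1)] by (simp add: comp_def)
qed

lemma lact_Cf: "s \<in> gmaps \<Longrightarrow> \<sigma> \<in> paulis3 \<Longrightarrow> \<tau> \<in> paulis3 \<Longrightarrow>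
   \<exists>\<sigma>'\<in>paulis3. \<exists>\<tau>'\<in>paulis3. lact s (bact (ctrl \<sigma> \<tau>) B0) = ract s (bact (ctrl \<sigma>' \<tau>') B0)"
  unfolding gmaps_def paulis3_def
  by (elim insertE emptyE; simp only: lc_all; blast)

lemma T_lact_gen: assumes s: "s \<in> gmaps" and F: "F \<in> Tset" shows "lact s F \<in> Tset"
proof -
  from F obtain \<sigma> \<tau> \<gamma> where st: "\<sigma> \<in> paulis3" "\<tau> \<in> paulis3" "\<gamma> \<in> Ebar" "F = \<gamma> (bact (ctrl \<sigma> \<tau>) B0)"
    unfolding Tset_def eef_class_def by blast
  obtain \<sigma>' \<tau>' where st': "\<sigma>' \<in> paulis3" "\<tau>' \<in> paulis3" "lact s (bact (ctrl \<sigma> \<tau>) B0) = ract s (bact (ctrl \<sigma>' \<tau>') B0)"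
    using lact_Cf[OF s st(1,2)] by blast
  obtain g where g: "g \<in> egens" "bact g = ract s" using gmaps_cases[OF s] by blast
  have "lact s F = \<gamma> (lact s (bact (ctrl \<sigma> \<tau>) B0))" using st(4) Ebar_lact[OF st(3) gm_lin[OF s]] by simp
  also have "\<dots> = (\<gamma> \<circ> bact g) (bact (ctrl \<sigma>' \<tau>') B0)" using st' g by simp
  finally show ?thesis using Tin[OF st'(1,2) Ebar_comp[OF st(3) bact_Ebar[OF g(1)]]] by simp
qed

lemma T_lact: "h \<in> Lmaps \<Longrightarrow> F \<in> Tset \<Longrightarrow> lact h F \<in> Tset"
proof (induction arbitrary: F rule: Lmaps.induct)
  case Lm_id thus ?case using lact_id[of F] by (simp add: id_def)
next
  case (Lm_step s h)
  have "lact s (lact h F) \<in> Tset" using T_lact_gen[OF Lm_step.hyps(1) Lm_step.IH[OF Lm_step.prems]] by simp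
  thus ?case using lact_lact[of h s F] gm_lin[OF Lm_step.hyps(1)] Lmaps_lin[OF Lm_step.hyps(2)] by (simp add: comp_def)
qed

lemma pclif_CX: "pclif CX01 (phi (bact (ctrl pZ pX) B0))"
proof (rule pclif_basis[OF unitary_CX])
  fix b assume "b \<in> {Zq 0, Xq 0, Zq 1, Xq 1}"
  thus "\<exists>c. c \<noteq> 0 \<and> adj CX01 ** pmat b ** CX01 = smul c (pmat (phi (bact (ctrl pZ pX) B0) b))"
    unfolding ctrl_CX[symmetric]
    by (elim insertE emptyE; simp only: conj_ZX_0 conj_ZX_1 conj_ZX_2 conj_ZX_3 Cf_ZX phi_Zq0 phi_Xq0 phi_Zq1 phi_Xq1 fst_conv snd_conv;
        intro exI[of _ 1]; simp)
qed

lemma phi_B0_id: "phi B0 = id" by (rule ext) (simp add: phi_B0)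

lemma part4: assumes L1: "L1 \<in> LocCliff" and L2: "L2 \<in> LocCliff"
  shows "\<exists>\<sigma>\<in>paulis3. \<exists>\<tau>\<in>paulis3. bact (L2 ** CX01 ** L1) B0 \<in> eef_class (bact (ctrl \<sigma> \<tau>) B0)"
proof -
  obtain h1 where h1: "h1 \<in> Lmaps" "pclif L1 h1" using LocCliff_prop[OF L1] by blast
  obtain h2 where h2: "h2 \<in> Lmaps" "pclif L2 h2" using LocCliff_prop[OF L2] by blast
  define G where "G = bact (ctrl pZ pX) B0"
  have pc: "pclif (L2 ** CX01 ** L1) (h1 \<circ> (phi G \<circ> h2))"
    unfolding G_def by (rule pclif_mult[OF pclif_mult[OF h2(2) pclif_CX] h1(2)])
  have "bact (L2 ** CX01 ** L1) B0 = ract (h1 \<circ> (phi G \<circ> h2)) B0" by (simp add: bact_pclif[OF pc])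
  also have "\<dots> = mk (h1 \<circ> phi G \<circ> h2)" by (simp add: ract_def phi_B0_id comp_assoc)
  also have "\<dots> = ract h2 (lact h1 G)"
    by (simp add: ract_def lact_def phi_mk plin_comp Lmaps_lin[OF h1(1)] phi_lin)
  finally have e: "bact (L2 ** CX01 ** L1) B0 = ract h2 (lact h1 G)" .
  have "G \<in> Tset" unfolding G_def using Tin[of pZ pX id] Ebar_id by (simp add: paulis3_def)
  hence "ract h2 (lact h1 G) \<in> Tset" using T_lact[OF h1(1)] T_ract[OF h2(1)] by blast
  thus ?thesis unfolding e Tset_def by blast
qed

theorem mainTheorem5:
  shows "ctrl pZ pX = CX01
    \<and> inj_on (\<lambda>(\<sigma>, \<tau>). eef_class (bact (ctrl \<sigma> \<tau>) B0)) (paulis3 \<times> paulis3)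
    \<and> (\<forall>\<sigma>\<in>paulis3. \<forall>\<tau>\<in>paulis3. eef_class (bact (ctrl \<sigma> \<tau>) B0) \<noteq> eef_class B0)
    \<and> (\<forall>L1\<in>LocCliff. \<forall>L2\<in>LocCliff. \<exists>\<sigma>\<in>paulis3. \<exists>\<tau>\<in>paulis3.
          bact (L2 ** CX01 ** L1) B0 \<in> eef_class (bact (ctrl \<sigma> \<tau>) B0))"
proof (intro conjI)
  show "ctrl pZ pX = CX01" by (rule ctrl_CX)
next
  show "inj_on (\<lambda>(\<sigma>, \<tau>). eef_class (bact (ctrl \<sigma> \<tau>) B0)) (paulis3 \<times> paulis3)"
  proof (rule inj_onI)
    fix x y assume x: "x \<in> paulis3 \<times> paulis3" and y: "y \<in> paulis3 \<times> paulis3"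
      and e: "(\<lambda>(\<sigma>, \<tau>). eef_class (bact (ctrl \<sigma> \<tau>) B0)) x = (\<lambda>(\<sigma>, \<tau>). eef_class (bact (ctrl \<sigma> \<tau>) B0)) y"
    obtain a b where xab: "x = (a,b)" by (cases x)
    obtain c d where ycd: "y = (c,d)" by (cases y)
    have e': "eef_class (bact (ctrl a b) B0) = eef_class (bact (ctrl c d) B0)" using e unfolding xab ycd by simp
    have k: "key (bact (ctrl a b) B0) = key (bact (ctrl c d) B0)" by (rule class_key[OF e'])
    show "x = y" using x y k unfolding xab ycd paulis3_def
      by (elim SigmaE2 insertE emptyE; simp only: key_XX key_XY key_XZ key_YX key_YY key_YZ key_ZX key_ZY key_ZZ; simp)
  qed
next
  show "\<forall>\<sigma>\<in>paulis3. \<forall>\<tau>\<in>paulis3. eef_class (bact (ctrl \<sigma> \<tau>) B0) \<noteq> eef_class B0"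
  proof (intro ballI notI)
    fix \<sigma> \<tau> assume s: "\<sigma> \<in> paulis3" and t: "\<tau> \<in> paulis3" and e: "eef_class (bact (ctrl \<sigma> \<tau>) B0) = eef_class B0"
    have k: "key (bact (ctrl \<sigma> \<tau>) B0) = key B0" using class_key[OF e] .
    show False using s t k unfolding paulis3_def
      by (elim insertE emptyE; simp only: key_XX key_XY key_XZ key_YX key_YY key_YZ key_ZX key_ZY key_ZZ key_B0; simp)
  qed
next
  show "\<forall>L1\<in>LocCliff. \<forall>L2\<in>LocCliff. \<exists>\<sigma>\<in>paulis3. \<exists>\<tau>\<in>paulis3.
          bact (L2 ** CX01 ** L1) B0 \<in> eef_class (bact (ctrl \<sigma> \<tau>) B0)"
    using part4 by blast
qed


end
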